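(* Let $S$ be an $\mathcal L$-definable set and $n\ge 1$. Let $\Delta_n=\{(\lambda,\dots,\lambda)\in\mathbb Z^n:\lambda\in\mathbb N\}$ (with $\mathbb N=\{0,1,2,\dots\}$). Then in the ring $R_S$, $$(p^n-1)\cdot[P(S\times\Delta_n)]=1.$$
   Context: Fix a prime $p$. $\mathcal L=\{+,\cdot,\mathcal O\}$ is the language of valued fields (ring operations and a unary predicate interpreted as the valuation ring $\mathbb Z_p$). An $\mathcal L$-definable set is a subset of some $\mathbb Q_p^n$ defined by a parameter-free $\mathcal L$-formula; a function is $\mathcal L$-definable if its graph is. $\mu$ denotes the Haar measure on $\mathbb Q_p^n$ normalized so that $\mu(\mathbb Z_p^n)=1$. For $X\subseteq S\times\mathbb Q_p^n$ and $s\in S$ write $X_s=\{x\in\mathbb Q_p^n:(s,x)\in X\}$. Definition of $R_S$: $R_S$ is the abelian group generated by symbols $[X]$, for all $\mathcal L$-definable $X\subseteq S\times\mathbb Q_p^n$ ($n\ge 0$ arbitrary) such that $\mu(X_s)<\infty$ for all $s\in S$, modulo the relations: (R1) $[X_1\cup X_2]=[X_1]+[X_2]$ for disjoint such $X_1,X_2\subseteq S\times\mathbb Q_p^n$; (R2) $[X]=0$ whenever $X\subseteq S\times\mathbb Q_p^n$ and $\dim X_s<n$ for every $s\in S$; (R3) $[X]=[Y]$ whenever $X,Y\subseteq S\times\mathbb Q_p^n$ and there is an $\mathcal L$-definable bijection $\phi:X\to Y$ inducing for each $s\in S$ a bijection $\phi_s:X_s\to Y_s$ such that $X_s,Y_s$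 are open in $\mathbb Q_p^n$, $\phi_s$ is $C^1$, and the $p$-adic norm of the Jacobian determinant of $\phi_s$ equals $1$ everywhere; (R4) $[X]=[X\times\mathbb Z_p]$ for every such $X$. $R_S$ is a commutative ring with unit $1=[S\times\mathbb Z_p]$ and multiplication $[X]\cdot[Y]=[X\times_S Y]$, where $X\times_S Y=\{(s,x,y): s\in S, x\in X_s, y\in Y_s\}$; integers are identified with their images in $R_S$. Angular component: for $x\in\mathbb Q_p^\times$, $\mathrm{ac}(x)=xp^{-v(x)}\bmod p\mathbb Z_p\in\mathbb F_p$, and $\mathrm{ac}(0)=0$; $v$ is the $p$-adic valuation, and $v(x)=(v(x_1),\dots,v(x_n))$ for tuples. For $\Lambda\subseteq S\times\mathbb Z^n$ (definable after identifying $\mathbb Z$ with the value group), $P(\Lambda)\subseteq S\times\mathbb Q_p^n$ is given by $P(\Lambda)_s=\{x\in\mathbb Q_p^n:\mathrm{ac}(x_1)=\dots=\mathrm{ac}(x_n)=1,\ v(x)\in\Lambda_s\}$. *)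

theory Defs
  imports "HOL-Analysis.Analysis"
begin

text \<open>We work in an arbitrary field 'k with a map v : 'k -> int, read as the
p-adic valuation on nonzero elements (the value at 0 is irrelevant and never used).
The predicate padic_field p v says that ('k, v) is a complete discretely valued
field of characteristic 0 with v(p) = 1 and residue field F_p; such a valued
field is (uniquely) isomorphic to Q_p with its p-adic valuation.\<close>

definition vclose :: "('k::field \<Rightarrow> int) \<Rightarrow> int \<Rightarrow> 'k \<Rightarrow> 'k \<Rightarrow> bool" where
  "vclose v N a b \<longleftrightarrow> a = b \<or> v (a - b) \<ge> N"

definition padic_field :: "nat \<Rightarrow> ('k::field \<Rightarrow> int) \<Rightarrow> bool" where
  "padic_field p v \<longleftrightarrow>
     prime p
   \<and> (\<forall>n::nat. n > 0 \<longrightarrow> (of_nat n :: 'k) \<noteq> 0)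
   \<and> (\<forall>x y. x \<noteq> 0 \<longrightarrow> y \<noteq> 0 \<longrightarrow> v (x * y) = v x + v y)
   \<and> (\<forall>x y. x \<noteq> 0 \<longrightarrow> y \<noteq> 0 \<longrightarrow> x + y \<noteq> 0 \<longrightarrow> v (x + y) \<ge> min (v x) (v y))
   \<and> v (of_nat p) = 1
   \<and> (\<forall>x. x \<noteq> 0 \<longrightarrow> v x \<ge> 0 \<longrightarrow> (\<exists>k<p. vclose v 1 x (of_nat k)))
   \<and> (\<forall>f :: nat \<Rightarrow> 'k. (\<forall>N. \<exists>M. \<forall>i\<ge>M. \<forall>j\<ge>M. vclose v N (f i) (f j))
        \<longrightarrow> (\<exists>a. \<forall>N. \<exists>M. \<forall>i\<ge>M. vclose v N (f i) a))"

definition valring :: "('k::field \<Rightarrow> int) \<Rightarrow> 'k set" where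
  "valring v = {x. x = 0 \<or> v x \<ge> 0}"

text \<open>ac(x) = 1 (for x nonzero): x * p^(-v x) is congruent to 1 modulo p O.\<close>
definition ac_one :: "nat \<Rightarrow> ('k::field \<Rightarrow> int) \<Rightarrow> 'k \<Rightarrow> bool" where
  "ac_one p v x \<longleftrightarrow> x \<noteq> 0 \<and> vclose v 1 (x * (of_nat p) powi (- v x)) 1"

definition pabs :: "nat \<Rightarrow> ('k::field \<Rightarrow> int) \<Rightarrow> 'k \<Rightarrow> real" where
  "pabs p v a = (if a = 0 then 0 else real p powr (- real_of_int (v a)))"

definition pnorm :: "nat \<Rightarrow> ('k::field \<Rightarrow> int) \<Rightarrow> 'k list \<Rightarrow> real" where
  "pnorm p v xs = foldr max (map (pabs p v) xs) 0"

datatype tm = Var nat | Cst int | Add tm tm | Mul tm tm | Minus tm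

datatype fm = Eq tm tm | InO tm | Not fm | Conj fm fm | Ex nat fm

primrec eval_tm :: "(nat \<Rightarrow> 'k::field) \<Rightarrow> tm \<Rightarrow> 'k" where
  "eval_tm e (Var i) = e i"
| "eval_tm e (Cst c) = of_int c"
| "eval_tm e (Add s t) = eval_tm e s + eval_tm e t"
| "eval_tm e (Mul s t) = eval_tm e s * eval_tm e t"
| "eval_tm e (Minus s) = - eval_tm e s"

primrec sat :: "('k::field \<Rightarrow> int) \<Rightarrow> (nat \<Rightarrow> 'k) \<Rightarrow> fm \<Rightarrow> bool" where
  "sat v e (Eq s t) = (eval_tm e s = eval_tm e t)"
| "sat v e (InO t) = (eval_tm e t \<in> valring v)"
| "sat v e (Not f) = (\<not> sat v e f)"
| "sat v e (Conj f g) = (sat v e f \<and> sat v e g)"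
| "sat v e (Ex i f) = (\<exists>a. sat v (e(i := a)) f)"

text \<open>Points of K^n are lists of length n.  A set A \<subseteq> K^n is L-definable if it is
defined by a parameter-free formula whose variables 0..n-1 are the coordinates
(all other variables are set to the definable constant 0).\<close>
definition definable :: "('k::field \<Rightarrow> int) \<Rightarrow> nat \<Rightarrow> 'k list set \<Rightarrow> bool" where
  "definable v n A \<longleftrightarrow> A \<subseteq> {xs. length xs = n} \<and>
     (\<exists>\<phi>. \<forall>xs. length xs = n \<longrightarrow> (xs \<in> A \<longleftrightarrow> sat v (\<lambda>i. if i < n then xs ! i else 0) \<phi>))"

definition fibre :: "('a \<times> 'b) set \<Rightarrow> 'a \<Rightarrow> 'b set" where
  "fibre X s = {x. (s, x) \<in> X}"

definition pball :: "('k::field \<Rightarrow> int) \<Rightarrow> nat \<Rightarrow> 'k list \<Rightarrow> int \<Rightarrow> 'k list set" where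
  "pball v n c k = {y. length y = n \<and> (\<forall>i<n. vclose v k (y ! i) (c ! i))}"

text \<open>Haar measure on K^n, normalised by mu(O^n) = 1, as outer measure: the
ball c + p^k O^n has measure p^(-k n).\<close>
definition haar :: "nat \<Rightarrow> ('k::field \<Rightarrow> int) \<Rightarrow> nat \<Rightarrow> 'k list set \<Rightarrow> ennreal" where
  "haar p v n A = (INF ck \<in> {(c, k). (\<forall>i. length (c i) = n) \<and> A \<subseteq> (\<Union>i. pball v n (c i) (k i))}.
      (\<Sum>i. ennreal (real p powr (- real_of_int (snd ck i) * real n))))"

definition popen :: "('k::field \<Rightarrow> int) \<Rightarrow> nat \<Rightarrow> 'k list set \<Rightarrow> bool" where
  "popen v n U \<longleftrightarrow> U \<subseteq> {xs. length xs = n} \<and> (\<forall>x\<in>U. \<exists>k. pball v n x k \<subseteq> U)"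

definition has_interior :: "('k::field \<Rightarrow> int) \<Rightarrow> nat \<Rightarrow> 'k list set \<Rightarrow> bool" where
  "has_interior v n A \<longleftrightarrow> (\<exists>x\<in>A. \<exists>k. pball v n x k \<subseteq> A)"

definition dim_ge :: "('k::field \<Rightarrow> int) \<Rightarrow> nat \<Rightarrow> 'k list set \<Rightarrow> nat \<Rightarrow> bool" where
  "dim_ge v n A d \<longleftrightarrow> (\<exists>I. distinct I \<and> length I = d \<and> (\<forall>i\<in>set I. i < n) \<and>
      has_interior v d ((\<lambda>xs. map (\<lambda>i. xs ! i) I) ` A))"

definition pdim :: "('k::field \<Rightarrow> int) \<Rightarrow> nat \<Rightarrow> 'k list set \<Rightarrow> int" where
  "pdim v n A = (if A = {} then -1 else int (GREATEST d. dim_ge v n A d))"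

definition det_n :: "nat \<Rightarrow> (nat \<Rightarrow> nat \<Rightarrow> 'k::field) \<Rightarrow> 'k" where
  "det_n n M = (\<Sum>\<sigma> \<in> {\<sigma>. \<sigma> permutes {..<n}}. of_int (sign \<sigma>) * (\<Prod>i<n. M i (\<sigma> i)))"

definition mat_app :: "nat \<Rightarrow> (nat \<Rightarrow> nat \<Rightarrow> 'k::field) \<Rightarrow> 'k list \<Rightarrow> 'k list" where
  "mat_app n M xs = map (\<lambda>j. \<Sum>i<n. M j i * xs ! i) [0..<n]"

definition list_diff :: "'k::field list \<Rightarrow> 'k list \<Rightarrow> 'k list" where
  "list_diff xs ys = map2 (-) xs ys"

definition C1_with_jac :: "nat \<Rightarrow> ('k::field \<Rightarrow> int) \<Rightarrow> nat \<Rightarrow> 'k list set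
     \<Rightarrow> ('k list \<Rightarrow> 'k list) \<Rightarrow> ('k list \<Rightarrow> nat \<Rightarrow> nat \<Rightarrow> 'k) \<Rightarrow> bool" where
  "C1_with_jac p v n U f D \<longleftrightarrow>
     (\<forall>x\<in>U. \<forall>\<epsilon>>0. \<exists>\<delta>>0. \<forall>y\<in>U. pnorm p v (list_diff y x) < \<delta> \<longrightarrow>
        pnorm p v (list_diff (list_diff (f y) (f x)) (mat_app n (D x) (list_diff y x)))
          \<le> \<epsilon> * pnorm p v (list_diff y x))
   \<and> (\<forall>x\<in>U. \<forall>i<n. \<forall>j<n. \<forall>\<epsilon>>0. \<exists>\<delta>>0. \<forall>y\<in>U. pnorm p v (list_diff y x) < \<delta> \<longrightarrow>
        pabs p v (D y i j - D x i j) < \<epsilon>)"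

section \<open>The ring R_S (as the free abelian group modulo relations R1--R4)\<close>

definition admissible :: "nat \<Rightarrow> ('k::field \<Rightarrow> int) \<Rightarrow> nat \<Rightarrow> 'k list set \<Rightarrow> nat
     \<Rightarrow> ('k list \<times> 'k list) set \<Rightarrow> bool" where
  "admissible p v m S n X \<longleftrightarrow>
     X \<subseteq> {(s, x). s \<in> S \<and> length x = n}
   \<and> definable v (m + n) ((\<lambda>(s, x). s @ x) ` X)
   \<and> (\<forall>s\<in>S. haar p v n (fibre X s) < top)"

type_synonym 'k gen = "nat \<times> ('k list \<times> 'k list) set"

text \<open>Elements of the free abelian group on symbols: finitely supported maps to int;
gsym (n, X) is the basis element [X] for X \<subseteq> S \<times> K^n.\<close>
definition gsym :: "'k gen \<Rightarrow> ('k gen \<Rightarrow> int)" where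
  "gsym a = (\<lambda>b. if b = a then 1 else 0)"

definition fam_times_O :: "('k::field \<Rightarrow> int) \<Rightarrow> ('k list \<times> 'k list) set \<Rightarrow> ('k list \<times> 'k list) set" where
  "fam_times_O v X = {(s, x @ [z]) | s x z. (s, x) \<in> X \<and> z \<in> valring v}"

inductive_set rel_subgroup :: "nat \<Rightarrow> ('k::field \<Rightarrow> int) \<Rightarrow> nat \<Rightarrow> 'k list set
    \<Rightarrow> ('k gen \<Rightarrow> int) set"
  for p v m S where
  zero: "(\<lambda>_. 0) \<in> rel_subgroup p v m S"
| diff: "a \<in> rel_subgroup p v m S \<Longrightarrow> b \<in> rel_subgroup p v m S \<Longrightarrow>
     (\<lambda>g. a g - b g) \<in> rel_subgroup p v m S"
| R1: "admissible p v m S n X1 \<Longrightarrow> admissible p v m S n X2 \<Longrightarrow> X1 \<inter> X2 = {} \<Longrightarrow>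
     (\<lambda>g. gsym (n, X1 \<union> X2) g - gsym (n, X1) g - gsym (n, X2) g) \<in> rel_subgroup p v m S"
| R2: "admissible p v m S n X \<Longrightarrow> (\<forall>s\<in>S. pdim v n (fibre X s) < int n) \<Longrightarrow>
     gsym (n, X) \<in> rel_subgroup p v m S"
| R3: "admissible p v m S n X \<Longrightarrow> admissible p v m S n Y \<Longrightarrow>
     definable v (m + n + n) {s @ x @ \<phi> s x | s x. (s, x) \<in> X} \<Longrightarrow>
     (\<forall>s\<in>S. bij_betw (\<phi> s) (fibre X s) (fibre Y s)
        \<and> popen v n (fibre X s) \<and> popen v n (fibre Y s)
        \<and> (\<exists>D. C1_with_jac p v n (fibre X s) (\<phi> s) D
              \<and> (\<forall>x\<in>fibre X s. pabs p v (det_n n (D x)) = 1))) \<Longrightarrow>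
     (\<lambda>g. gsym (n, X) g - gsym (n, Y) g) \<in> rel_subgroup p v m S"
| R4: "admissible p v m S n X \<Longrightarrow>
     (\<lambda>g. gsym (n, X) g - gsym (Suc n, fam_times_O v X) g) \<in> rel_subgroup p v m S"

definition Pset :: "nat \<Rightarrow> ('k::field \<Rightarrow> int) \<Rightarrow> ('k list \<times> int list) set
     \<Rightarrow> ('k list \<times> 'k list) set" where
  "Pset p v \<Lambda> = {(s, x). \<exists>l. (s, l) \<in> \<Lambda> \<and> length x = length l \<and>
       (\<forall>i<length x. ac_one p v (x ! i) \<and> v (x ! i) = l ! i)}"

definition Delta :: "nat \<Rightarrow> int list set" where
  "Delta n = {replicate n (int l) | l. True}"

text \<open>The unit 1 = [S \<times> Z_p] of R_S.\<close>
definition unit_fam :: "('k::field \<Rightarrow> int) \<Rightarrow> 'k list set \<Rightarrow> ('k list \<times> 'k list) set" where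
  "unit_fam v S = {(s, [z]) | s z. s \<in> S \<and> z \<in> valring v}"

end

theory Submission
  imports Defs "HOL-Number_Theory.Residues"
begin


locale pf =
  fixes p :: nat and v :: "'k::field \<Rightarrow> int"
  assumes pf: "padic_field p v"
begin

lemma prime: "prime p" using pf unfolding padic_field_def by (elim conjE) assumption
lemma p2: "p \<ge> 2" using prime by (simp add: prime_ge_2_nat)
lemma ofnat_all: "\<forall>n::nat. n > 0 \<longrightarrow> (of_nat n :: 'k) \<noteq> 0" using pf unfolding padic_field_def by (elim conjE) assumption
lemma ofnat_nz: "n > 0 \<Longrightarrow> (of_nat n :: 'k) \<noteq> 0" using ofnat_all by blast
lemma vmul_all: "\<forall>x y. x \<noteq> 0 \<longrightarrow> y \<noteq> 0 \<longrightarrow> v (x * y) = v x + v y" using pf unfolding padic_field_def by (elim conjE) assumption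
lemma vmul: "x \<noteq> 0 \<Longrightarrow> y \<noteq> 0 \<Longrightarrow> v (x * y) = v x + v y" using vmul_all by blast
lemma vadd_all: "\<forall>x y. x \<noteq> 0 \<longrightarrow> y \<noteq> 0 \<longrightarrow> x + y \<noteq> 0 \<longrightarrow> v (x + y) \<ge> min (v x) (v y)"
  using pf unfolding padic_field_def by (elim conjE) assumption
lemma vadd: "x \<noteq> 0 \<Longrightarrow> y \<noteq> 0 \<Longrightarrow> x + y \<noteq> 0 \<Longrightarrow> v (x + y) \<ge> min (v x) (v y)" using vadd_all by blast
lemma vp: "v (of_nat p) = 1" using pf unfolding padic_field_def by (elim conjE) assumption
lemma resid_all: "\<forall>x. x \<noteq> 0 \<longrightarrow> v x \<ge> 0 \<longrightarrow> (\<exists>k<p. vclose v 1 x (of_nat k))" using pf unfolding padic_field_def by (elim conjE) assumption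
lemma resid0: "x \<noteq> 0 \<Longrightarrow> v x \<ge> 0 \<Longrightarrow> (\<exists>k<p. vclose v 1 x (of_nat k))" using resid_all by blast

lemma ofint_nz: "z \<noteq> 0 \<Longrightarrow> (of_int z :: 'k) \<noteq> 0"
proof (cases "z > 0")
  case True assume "z \<noteq> 0"
  then have "(of_int z :: 'k) = of_nat (nat z)" using True by simp
  then show ?thesis using ofnat_nz[of "nat z"] True by simp
next
  case False assume "z \<noteq> 0"
  then have "(of_int z :: 'k) = - of_nat (nat (-z))" using False by simp
  then show ?thesis using ofnat_nz[of "nat (-z)"] False \<open>z \<noteq> 0\<close> by simp
qed

lemma pnz: "(of_nat p :: 'k) \<noteq> 0" using ofnat_nz p2 by simp

lemma v1: "v 1 = 0"
  using vmul[of 1 1] by simp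

lemma vm1: "v (-1) = 0"
  using vmul[of "-1" "-1"] v1 by simp

lemma vneg: "x \<noteq> 0 \<Longrightarrow> v (- x) = v x"
  using vmul[of "-1" x] vm1 by simp

lemma vinv: "x \<noteq> 0 \<Longrightarrow> v (inverse x) = - v x"
  using vmul[of x "inverse x"] v1 by simp

lemma vdiv: "x \<noteq> 0 \<Longrightarrow> y \<noteq> 0 \<Longrightarrow> v (x / y) = v x - v y"
  by (simp add: divide_inverse vmul vinv)

lemma vpow: "x \<noteq> 0 \<Longrightarrow> v (x ^ k) = int k * v x"
proof (induction k)
  case 0 then show ?case by (simp add: v1)
next
  case (Suc k)
  assume x: "x \<noteq> 0"
  then have "x ^ k \<noteq> 0" by simp
  then have "v (x * x ^ k) = v x + v (x ^ k)" using x vmul by blast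
  then show ?case using Suc x by (simp add: algebra_simps)
qed

lemma vpp: "v ((of_nat p :: 'k) ^ k) = int k"
  using vpow[OF pnz] vp by simp

lemma vppi: "v ((of_nat p :: 'k) powi k) = k"
proof (cases "k \<ge> 0")
  case True then show ?thesis using vpp[of "nat k"] by (simp add: power_int_def)
next
  case False
  have e: "(of_nat p :: 'k) powi k = inverse (of_nat p) ^ nat (-k)"
    using False unfolding power_int_def by simp
  have "inverse (of_nat p :: 'k) \<noteq> 0" using pnz by simp
  then have "v (inverse (of_nat p :: 'k) ^ nat (-k)) = int (nat (-k)) * v (inverse (of_nat p :: 'k))"
    by (rule vpow)
  also have "v (inverse (of_nat p :: 'k)) = -1" using vinv[OF pnz] vp by simp
  finally show ?thesis using e False by simp
qed

definition J :: "int \<Rightarrow> 'k \<Rightarrow> bool" where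
  "J k x \<longleftrightarrow> x = 0 \<or> k \<le> v x"

lemma J0[simp]: "J k 0" by (simp add: J_def)

lemma J_add: "J k x \<Longrightarrow> J k y \<Longrightarrow> J k (x + y)"
  unfolding J_def using vadd[of x y] by (cases "x = 0"; cases "y = 0"; cases "x + y = 0") auto

lemma J_neg: "J k x \<Longrightarrow> J k (- x)"
  by (cases "x = 0") (simp_all add: J_def vneg)

lemma J_neg_iff[simp]: "J k (- x) \<longleftrightarrow> J k x"
  using J_neg[of k x] J_neg[of k "-x"] by auto

lemma J_diff: "J k x \<Longrightarrow> J k y \<Longrightarrow> J k (x - y)"
  using J_add[of k x "-y"] by simp

lemma J_mult: "J a x \<Longrightarrow> J b y \<Longrightarrow> J (a + b) (x * y)"
proof -
  assume a: "J a x" and b: "J b y"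
  show ?thesis
  proof (cases "x = 0 \<or> y = 0")
    case True then show ?thesis by (auto simp: J_def)
  next
    case False
    then have "v (x * y) = v x + v y" by (simp add: vmul)
    then show ?thesis using a b False by (simp add: J_def)
  qed
qed

lemma J_mono: "a \<le> b \<Longrightarrow> J b x \<Longrightarrow> J a x"
  unfolding J_def by auto

lemma J_sum: "(\<And>i. i \<in> A \<Longrightarrow> J k (f i)) \<Longrightarrow> J k (\<Sum>i\<in>A. f i)"
  by (induction A rule: infinite_finite_induct) (auto intro: J_add)

lemma valring_J: "x \<in> valring v \<longleftrightarrow> J 0 x"
  by (simp add: valring_def J_def)

lemma vclose_J: "vclose v k a b \<longleftrightarrow> J k (a - b)"
  by (simp add: vclose_def J_def)

lemma J1: "J 0 1" by (simp add: J_def v1)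

lemma J_ofnat: "J 0 (of_nat n)"
  by (induction n) (auto intro: J_add J1)

lemma J_ofint: "J 0 (of_int z)"
proof (cases "z \<ge> 0")
  case True then show ?thesis using J_ofnat[of "nat z"] by simp
next
  case False
  then have "(of_int z :: 'k) = - of_nat (nat (-z))" by simp
  then show ?thesis using J_ofnat[of "nat (-z)"] by simp
qed

lemma J_p: "J 1 (of_nat p)" by (simp add: J_def vp)

lemma J_pow: "J 0 x \<Longrightarrow> J 0 (x ^ k)"
  by (induction k) (auto intro: J1 dest: J_mult)

lemma J_pmult: "J k x \<Longrightarrow> J (k + 1) (of_nat p * x)"
proof -
  assume "J k x"
  then have "J (1 + k) (of_nat p * x)" by (rule J_mult[OF J_p])
  then show ?thesis by (simp add: add.commute)
qed

lemma J_pdiv: "J (k + 1) x \<Longrightarrow> J k (x / of_nat p)"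
proof (cases "x = 0")
  case False assume "J (k + 1) x"
  moreover have "v (x / of_nat p) = v x - 1" using False pnz vdiv[of x "of_nat p"] vp by simp
  ultimately show ?thesis using False by (simp add: J_def)
qed (simp add: J_def)

lemma J_ppow: "J (int k) ((of_nat p :: 'k) ^ k)"
  using vpp by (simp add: J_def)

lemma J_v: "x \<noteq> 0 \<Longrightarrow> J (v x) x" by (simp add: J_def)

lemma J_divv: "J (k + v y) x \<Longrightarrow> y \<noteq> 0 \<Longrightarrow> J k (x / y)"
proof (cases "x = 0")
  case False assume "J (k + v y) x" "y \<noteq> 0"
  moreover have "v (x / y) = v x - v y" using False \<open>y \<noteq> 0\<close> vdiv[of x y] by simp
  ultimately show ?thesis using False by (simp add: J_def)
qed (simp add: J_def)

lemma J_multv: "J k x \<Longrightarrow> y \<noteq> 0 \<Longrightarrow> J (k + v y) (x * y)"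
  using J_mult[of k x "v y" y] J_v by auto

lemma ofint_J1_dvd: "J 1 (of_int z :: 'k) \<Longrightarrow> int p dvd z"
proof (rule ccontr)
  assume J: "J 1 (of_int z :: 'k)" and nd: "\<not> int p dvd z"
  have cop: "coprime (int p) z" using prime nd
    by (simp add: prime_imp_coprime_int prime_nat_iff_prime)
  then obtain a b where ab: "a * int p + b * z = 1"
    using bezout_int[of "int p" z] by auto
  have "J 1 (of_int (a * int p + b * z) :: 'k)"
  proof -
    have "J 1 (of_int a * of_nat p :: 'k)" using J_mult[OF J_ofint[of a] J_p] by simp
    moreover have "J 1 (of_int b * of_int z :: 'k)" using J_mult[OF J_ofint[of b] J] by simp
    ultimately show ?thesis by (simp add: J_add)
  qed
  then show False using ab by (simp add: J_def v1)
qed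

lemma dvd_J1: "int p dvd z \<Longrightarrow> J 1 (of_int z :: 'k)"
proof -
  assume "int p dvd z" then obtain q where "z = int p * q" by blast
  then show ?thesis using J_mult[OF J_p J_ofint[of q]] by simp
qed

lemma v_unit_int: "\<not> int p dvd z \<Longrightarrow> v (of_int z :: 'k) = 0"
proof -
  assume nd: "\<not> int p dvd z"
  then have z: "z \<noteq> 0" by auto
  have "J 0 (of_int z :: 'k)" by (rule J_ofint)
  moreover have "\<not> J 1 (of_int z :: 'k)" using nd ofint_J1_dvd by blast
  ultimately show ?thesis using ofint_nz[OF z] by (auto simp: J_def)
qed

lemma resid: "J 0 x \<Longrightarrow> \<exists>k<p. J 1 (x - of_nat k)"
proof (cases "x = 0")
  case True then show ?thesis using p2 by (intro exI[of _ 0]) auto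
next
  case False assume "J 0 x"
  then show ?thesis using resid0[OF False] False by (auto simp: J_def vclose_J)
qed

end


context pf begin

definition W :: "'k \<Rightarrow> bool" where
  "W t \<longleftrightarrow> t \<noteq> 0 \<and> J 0 t \<and> (\<exists>y. \<exists>j<p - 1. t = of_nat p ^ j * y ^ (p - 1))"

definition ac1 :: "'k \<Rightarrow> bool" where
  "ac1 t \<longleftrightarrow> t \<noteq> 0 \<and> J 1 (t * of_nat p powi (- v t) - 1)"

lemma ac_one_iff: "ac_one p v x \<longleftrightarrow> ac1 x"
  by (simp add: ac_one_def ac1_def vclose_J)

lemma W_pow: "W ((of_nat p :: 'k) ^ l)"
proof -
  have p1: "p - 1 > 0" using p2 by simp
  define q j where "q = l div (p - 1)" and "j = l mod (p - 1)"
  have l: "l = j + q * (p - 1)" unfolding q_def j_def using mod_div_mult_eq[of l "p - 1"] by simp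
  have j: "j < p - 1" unfolding j_def using p1 by simp
  have "(of_nat p :: 'k) ^ l = of_nat p ^ j * (of_nat p ^ q) ^ (p - 1)"
    by (subst l) (simp add: power_add power_mult)
  moreover have "J 0 ((of_nat p :: 'k) ^ l)" using J_ppow[of l] J_mono[of 0 "int l"] by simp
  ultimately have eq: "(of_nat p :: 'k) ^ l = of_nat p ^ j * (of_nat p ^ q) ^ (p - 1)" and J: "J 0 ((of_nat p :: 'k) ^ l)" by auto
  have nz: "(of_nat p :: 'k) ^ l \<noteq> 0" using pnz by simp
  have "\<exists>y. \<exists>j<p - 1. (of_nat p :: 'k) ^ l = of_nat p ^ j * y ^ (p - 1)" using eq j by blast
  then show ?thesis unfolding W_def using nz J by blast
qed

lemma J_powdiff: "J 0 a \<Longrightarrow> J 0 b \<Longrightarrow> J 1 (a - b) \<Longrightarrow> J 1 (a ^ k - b ^ k)"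
proof (induction k)
  case 0 then show ?case by simp
next
  case (Suc k)
  have e: "a ^ Suc k - b ^ Suc k = a * (a ^ k - b ^ k) + b ^ k * (a - b)"
    by (simp add: algebra_simps)
  have "J (0 + 1) (a * (a ^ k - b ^ k))" using J_mult[OF Suc.prems(1) Suc.IH[OF Suc.prems]] .
  moreover have "J (0 + 1) (b ^ k * (a - b))" using J_mult[OF J_pow[OF Suc.prems(2)] Suc.prems(3)] .
  ultimately show ?case unfolding e by (simp add: J_add)
qed

lemma J01_v0: "J 0 w \<Longrightarrow> \<not> J 1 w \<Longrightarrow> w \<noteq> 0 \<and> v w = 0"
  unfolding J_def by auto

lemma unit_norm: "y \<noteq> 0 \<Longrightarrow> v (y * of_nat p powi (- v y)) = 0 \<and> y * of_nat p powi (- v y) \<noteq> 0"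
proof -
  assume y: "y \<noteq> 0"
  have nz: "(of_nat p :: 'k) powi (- v y) \<noteq> 0" using pnz by (simp add: power_int_not_zero)
  then show ?thesis using y vmul[OF y nz] vppi by simp
qed

lemma W_ac1: "W t \<Longrightarrow> ac1 t"
proof -
  assume "W t"
  then obtain y j where t0: "t \<noteq> 0" and j: "j < p - 1" and t: "t = of_nat p ^ j * y ^ (p - 1)"
    unfolding W_def by blast
  have y: "y \<noteq> 0" using t t0 p2 by (cases "y = 0") auto
  define u where "u = y * of_nat p powi (- v y)"
  have u: "v u = 0" "u \<noteq> 0" using unit_norm[OF y] unfolding u_def by auto
  have vt: "v t = int j + int (p - 1) * v y"
    using t y pnz vmul[of "of_nat p ^ j" "y ^ (p - 1)"] vpp vpow[OF y] by simp
  have pp: "(of_nat p :: 'k) \<noteq> 0" by (rule pnz)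
  have "t * of_nat p powi (- v t) = u ^ (p - 1)"
  proof -
    have "(of_nat p :: 'k) powi (- v t) = of_nat p powi (- int j + - (int (p - 1) * v y))"
      by (simp add: vt)
    also have "\<dots> = of_nat p powi (- int j) * of_nat p powi (- (int (p - 1) * v y))"
      by (rule power_int_add) (simp add: pp)
    finally have "t * of_nat p powi (- v t) = of_nat p ^ j * y ^ (p - 1) * (of_nat p powi (- int j) * of_nat p powi (- (int (p - 1) * v y)))"
      unfolding t by simp
    also have "of_nat p powi (- (int (p - 1) * v y)) = (of_nat p powi (- v y) :: 'k) ^ (p - 1)"
      by (simp add: power_int_power' mult.commute)
    also have "(of_nat p :: 'k) powi (- int j) = inverse (of_nat p ^ j)"
      by (simp add: power_int_minus)
    finally show ?thesis unfolding u_def using pp by (simp add: power_mult_distrib field_simps)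
  qed
  moreover have "J 1 (u ^ (p - 1) - 1)"
  proof -
    have u0: "J 0 u" using u by (simp add: J_def)
    obtain k where k: "k < p" "J 1 (u - of_nat k)" using resid[OF u0] by blast
    have k0: "k \<noteq> 0"
    proof
      assume "k = 0"
      then have "J 1 u" using k(2) by simp
      then show False using u by (simp add: J_def)
    qed
    have "J 1 (u ^ (p - 1) - of_nat k ^ (p - 1))"
      by (rule J_powdiff[OF u0 J_ofnat k(2)])
    moreover have "J 1 ((of_nat k :: 'k) ^ (p - 1) - 1)"
    proof -
      have "\<not> p dvd k" using k k0 by (auto dest: dvd_imp_le)
      then have "[k ^ (p - 1) = 1] (mod p)" using fermat_theorem prime by blast
      then have "int p dvd int (k ^ (p - 1)) - 1"
        by (metis cong_iff_dvd_diff cong_int_iff of_nat_1 one_le_power k0 less_one linorder_not_le of_nat_power int_ops(6))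
      then have "J 1 (of_int (int (k ^ (p - 1)) - 1) :: 'k)" by (rule dvd_J1)
      then show ?thesis by simp
    qed
    ultimately have "J 1 ((u ^ (p - 1) - of_nat k ^ (p - 1)) + (of_nat k ^ (p - 1) - 1))" by (rule J_add)
    then show ?thesis by simp
  qed
  ultimately show ?thesis unfolding ac1_def using t0 by simp
qed

lemma ac1_close: "ac1 t \<Longrightarrow> ac1 t' \<Longrightarrow> v t = v t' \<Longrightarrow> J (1 + v t) (t' - t)"
proof -
  assume a: "ac1 t" "ac1 t'" and e: "v t = v t'"
  define u where "u = t * of_nat p powi (- v t)"
  define u' where "u' = t' * of_nat p powi (- v t)"
  have nz: "(of_nat p :: 'k) powi (v t) \<noteq> 0" using pnz by (simp add: power_int_not_zero)
  have tt: "t = u * of_nat p powi (v t)" "t' = u' * of_nat p powi (v t)"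
    unfolding u_def u'_def using nz by (simp_all add: power_int_minus field_simps)
  have "J 1 (u' - u)" using a e unfolding ac1_def u_def u'_def
    using J_diff[of 1 "t' * of_nat p powi (- v t') - 1" "t * of_nat p powi (- v t) - 1"] by simp
  then have "J (1 + v (of_nat p powi (v t) :: 'k)) ((u' - u) * of_nat p powi (v t))"
    using J_multv nz by blast
  then show ?thesis using tt vppi by (simp add: algebra_simps)
qed

lemma small_dvd: "int p dvd d \<Longrightarrow> \<bar>d\<bar> < int p \<Longrightarrow> d = 0"
  using dvd_imp_le_int[of d "int p"] by (cases "d = 0") auto

definition Qs :: "nat \<Rightarrow> int list \<Rightarrow> 'k list set" where
  "Qs n b = {x. length x = n \<and> (\<exists>t. W t \<and> (\<forall>a<n. \<exists>z. J 0 z \<and> x ! a - t * of_int (b ! a) = of_nat p * t * z))}"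

definition Bset :: "nat \<Rightarrow> int list set" where
  "Bset n = {b. length b = n \<and> (\<forall>a<n. 0 \<le> b ! a \<and> b ! a < int p) \<and> (\<exists>a<n. b ! a \<noteq> 0)}"

lemma Qs_eq: "(x :: 'k list) ! a - t * of_int c = of_nat p * t * z \<longleftrightarrow> x ! a = t * (of_int c + of_nat p * z)"
proof -
  have h: "t * (of_int c + of_nat p * z) = of_nat p * t * z + t * of_int c" by (simp add: algebra_simps)
  show ?thesis unfolding h by (rule diff_eq_eq)
qed

lemma Qs_O: "x \<in> Qs n b \<Longrightarrow> a < n \<Longrightarrow> J 0 (x ! a)"
proof -
  assume "x \<in> Qs n b" "a < n"
  then obtain t z where t: "W t" and z: "J 0 z" and e: "x ! a = t * (of_int (b ! a) + of_nat p * z)"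
    unfolding Qs_def Qs_eq by blast
  have "J 0 (of_int (b ! a) + of_nat p * z)"
    using J_add[OF J_ofint J_mono[OF _ J_pmult[OF z]]] by simp
  then show ?thesis using J_mult[of 0 t] t unfolding e W_def by fastforce
qed

lemma unit_term: "\<not> int p dvd c \<Longrightarrow> J 0 z \<Longrightarrow> (of_int c + of_nat p * z :: 'k) \<noteq> 0 \<and> v (of_int c + of_nat p * z) = 0"
proof -
  assume c: "\<not> int p dvd c" and z: "J 0 z"
  have "J 1 (of_nat p * z)" using J_pmult[OF z] by simp
  have "J 0 (of_int c + of_nat p * z :: 'k)"
    using J_add[OF J_ofint J_mono[OF _ \<open>J 1 (of_nat p * z)\<close>]] by simp
  moreover have "\<not> J 1 (of_int c + of_nat p * z :: 'k)"
  proof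
    assume "J 1 (of_int c + of_nat p * z :: 'k)"
    then have "J 1 ((of_int c + of_nat p * z) - of_nat p * z :: 'k)" using J_diff \<open>J 1 (of_nat p * z)\<close> by blast
    then show False using ofint_J1_dvd c by simp
  qed
  ultimately show ?thesis using J01_v0 by blast
qed

lemma Bset_unit: "b \<in> Bset n \<Longrightarrow> a < n \<Longrightarrow> b ! a \<noteq> 0 \<Longrightarrow> \<not> int p dvd b ! a"
  unfolding Bset_def using zdvd_imp_le by fastforce

lemma Qs_zero: "b \<in> Bset n \<Longrightarrow> replicate n 0 \<notin> Qs n b"
proof
  assume b: "b \<in> Bset n" and q: "replicate n 0 \<in> Qs n b"
  then obtain a where a: "a < n" "b ! a \<noteq> 0" unfolding Bset_def by blast
  then obtain t z where t: "W t" and z: "J 0 z" and e: "replicate n 0 ! a = t * (of_int (b ! a) + of_nat p * z)"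
    using q unfolding Qs_def Qs_eq by blast
  have "t \<noteq> 0" using t W_def by blast
  then show False using e a unit_term[OF Bset_unit[OF b a] z] by simp
qed

lemma Qs_v: "x \<in> Qs n b \<Longrightarrow> W t \<Longrightarrow> J 0 z \<Longrightarrow> x ! a = t * (of_int (b ! a) + of_nat p * z) \<Longrightarrow> \<not> int p dvd b ! a
   \<Longrightarrow> x ! a \<noteq> 0 \<and> v (x ! a) = v t"
proof -
  assume t: "W t" and z: "J 0 z" and e: "x ! a = t * (of_int (b ! a) + of_nat p * z)" and c: "\<not> int p dvd b ! a"
  have t0: "t \<noteq> 0" using t W_def by blast
  show ?thesis using e unit_term[OF c z] vmul[OF t0] t0 by simp
qed

lemma Qs_disj: "b \<in> Bset n \<Longrightarrow> b' \<in> Bset n \<Longrightarrow> x \<in> Qs n b \<Longrightarrow> x \<in> Qs n b' \<Longrightarrow> b = b'"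
proof -
  assume b: "b \<in> Bset n" and b': "b' \<in> Bset n" and q: "x \<in> Qs n b" and q': "x \<in> Qs n b'"
  obtain t where t: "W t" and tz: "\<forall>a<n. \<exists>z. J 0 z \<and> x ! a = t * (of_int (b ! a) + of_nat p * z)"
    using q unfolding Qs_def Qs_eq by blast
  obtain t' where t': "W t'" and tz': "\<forall>a<n. \<exists>z. J 0 z \<and> x ! a = t' * (of_int (b' ! a) + of_nat p * z)"
    using q' unfolding Qs_def Qs_eq by blast
  have t0: "t \<noteq> 0" "t' \<noteq> 0" using t t' W_def by blast+
  have le: "v t' \<le> v t" if bb: "b \<in> Bset n" and tt: "W t" "W t'"
    and z1: "\<forall>a<n. \<exists>z. J 0 z \<and> x ! a = t * (of_int (b ! a) + of_nat p * z)"
    and z2: "\<forall>a<n. \<exists>z. J 0 z \<and> x ! a = t' * (of_int (b' ! a) + of_nat p * z)" for b b' t t'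
  proof -
    obtain a where a: "a < n" "b ! a \<noteq> 0" using bb unfolding Bset_def by blast
    obtain z where z: "J 0 z" "x ! a = t * (of_int (b ! a) + of_nat p * z)" using z1 a by blast
    obtain z' where z': "J 0 z'" "x ! a = t' * (of_int (b' ! a) + of_nat p * z')" using z2 a by blast
    have t0: "t' \<noteq> 0" using tt W_def by blast
    have xv: "x ! a \<noteq> 0 \<and> v (x ! a) = v t" using unit_term[OF Bset_unit[OF bb a] z(1)] z(2) tt W_def vmul by auto
    have "J 0 (of_int (b' ! a) + of_nat p * z' :: 'k)"
      using J_add[OF J_ofint J_mono[OF _ J_pmult[OF z'(1)]]] by simp
    then have A: "J (0 + v t') ((of_int (b' ! a) + of_nat p * z') * t')" by (rule J_multv[OF _ t0])
    have "x ! a = (of_int (b' ! a) + of_nat p * z') * t'" using z'(2) by (simp only: mult.commute)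
    then have "J (v t') (x ! a)" using A by simp
    then show ?thesis using xv by (simp add: J_def)
  qed
  have vv: "v t = v t'" using le[OF b t t' tz tz'] le[OF b' t' t tz' tz] by simp
  have cl: "J (1 + v t) (t' - t)" using ac1_close[OF W_ac1[OF t] W_ac1[OF t'] vv] .
  show "b = b'"
  proof (rule nth_equalityI)
    show "length b = length b'" using b b' Bset_def by simp
    fix a assume "a < length b"
    then have a: "a < n" using b Bset_def by simp
    obtain z where z: "J 0 z" "x ! a = t * (of_int (b ! a) + of_nat p * z)" using tz a by blast
    obtain z' where z': "J 0 z'" "x ! a = t' * (of_int (b' ! a) + of_nat p * z')" using tz' a by blast
    have e: "t * (of_int (b ! a - b' ! a)) = (t' - t) * of_int (b' ! a) + of_nat p * t' * z' - of_nat p * t * z"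
      using z(2) z'(2) by (simp add: algebra_simps)
    have "J (1 + v t) ((t' - t) * of_int (b' ! a))" using J_mult[OF cl J_ofint] by simp
    moreover have "J (1 + v t) (of_nat p * t' * z')"
      using J_mult[OF J_mult[OF J_p J_v[OF t0(2)]] z'(1)] vv by simp
    moreover have "J (1 + v t) (of_nat p * t * z)"
      using J_mult[OF J_mult[OF J_p J_v[OF t0(1)]] z(1)] by simp
    ultimately have "J (1 + v t) (t * (of_int (b ! a - b' ! a)))" unfolding e
      by (intro J_diff J_add)
    then have "J (1 + v t) ((of_int (b ! a - b' ! a)) * t)" by (simp add: mult.commute)
    then have "J 1 ((of_int (b ! a - b' ! a)) * t / t :: 'k)" using J_divv t0 by blast
    then have "J 1 (of_int (b ! a - b' ! a) :: 'k)" using t0 by simp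
    then have "int p dvd b ! a - b' ! a" by (rule ofint_J1_dvd)
    moreover have "0 \<le> b ! a" "b ! a < int p" "0 \<le> b' ! a" "b' ! a < int p"
      using a b b' unfolding Bset_def by auto
    ultimately show "b ! a = b' ! a" using small_dvd[of "b ! a - b' ! a"] by simp
  qed
qed

end


context pf begin

lemma Qs_cover:
  assumes len: "length x = n" and O: "\<forall>a<n. J 0 (x ! a)" and nz: "x \<noteq> replicate n 0"
  shows "\<exists>b\<in>Bset n. x \<in> Qs n b"
proof -
  define N where "N = {a. a < n \<and> x ! a \<noteq> 0}"
  have N: "finite N" "N \<noteq> {}" unfolding N_def using nz len
    by (auto intro: nth_equalityI simp: list_eq_iff_nth_eq)
  define m where "m = Min ((\<lambda>a. v (x ! a)) ` N)"
  have "m \<in> (\<lambda>a. v (x ! a)) ` N" using Min_in[of "(\<lambda>a. v (x ! a)) ` N"] N unfolding m_def by blast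
  then obtain a0 where a0: "a0 \<in> N" "v (x ! a0) = m" by blast
  have mle: "\<And>a. a \<in> N \<Longrightarrow> m \<le> v (x ! a)" unfolding m_def using N by simp
  have m0: "m \<ge> 0" using a0 O unfolding N_def J_def by auto
  define t where "t = (of_nat p :: 'k) ^ nat m"
  have t: "W t" unfolding t_def by (rule W_pow)
  have t0: "t \<noteq> 0" using t W_def by blast
  have vt: "v t = m" unfolding t_def using vpp m0 by simp
  define y where "y = (\<lambda>a. x ! a / t)"
  have yO: "J 0 (y a)" if "a < n" for a
  proof (cases "x ! a = 0")
    case True then show ?thesis by (simp add: y_def)
  next
    case False
    then have "a \<in> N" using that N_def by simp
    then have "J (0 + v t) (x ! a)" using mle vt by (simp add: J_def)
    then show ?thesis unfolding y_def using J_divv t0 by blast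
  qed
  define r where "r = (\<lambda>a. SOME k. k < p \<and> J 1 (y a - of_nat k))"
  have r: "r a < p \<and> J 1 (y a - of_nat (r a))" if "a < n" for a
    unfolding r_def using someI_ex[OF resid[OF yO[OF that]]] .
  define b where "b = map (\<lambda>a. int (r a)) [0..<n]"
  have "b \<in> Bset n"
  proof -
    have "r a0 \<noteq> 0"
    proof
      assume "r a0 = 0"
      then have "J 1 (y a0)" using r[of a0] a0 N_def by simp
      moreover have "y a0 \<noteq> 0" "v (y a0) = 0" using a0 t0 vt unfolding y_def N_def by (auto simp: vdiv)
      ultimately show False by (simp add: J_def)
    qed
    then show ?thesis unfolding Bset_def b_def using r a0 N_def by auto
  qed
  moreover have "x \<in> Qs n b"
  proof -
  have "\<forall>a<n. \<exists>z. J 0 z \<and> x ! a - t * of_int (b ! a) = of_nat p * t * z"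
  proof (intro allI impI)
    fix a assume a: "a < n"
    define z where "z = (y a - of_nat (r a)) / of_nat p"
    have "J 0 z" unfolding z_def using J_pdiv[of 0] r[OF a] by simp
    moreover have "x ! a - t * of_int (b ! a) = of_nat p * t * z"
      unfolding z_def b_def y_def using a t0 pnz by (simp add: field_simps)
    ultimately show "\<exists>z. J 0 z \<and> x ! a - t * of_int (b ! a) = of_nat p * t * z" by blast
  qed
  then show ?thesis unfolding Qs_def using len t by blast
  qed
  ultimately show ?thesis by blast
qed

lemma Qs_ones:
  "x \<in> Qs n (replicate n 1) \<longleftrightarrow> length x = n \<and> (\<exists>l::nat. \<forall>i<n. ac_one p v (x ! i) \<and> v (x ! i) = int l)"
proof
  assume q: "x \<in> Qs n (replicate n 1)"
  then obtain t where t: "W t" and tz: "\<forall>a<n. \<exists>z. J 0 z \<and> x ! a = t * (of_int (replicate n 1 ! a) + of_nat p * z)"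
    and len: "length x = n"
    unfolding Qs_def Qs_eq by blast
  have t0: "t \<noteq> 0" and tO: "J 0 t" using t W_def by blast+
  have vt: "v t \<ge> 0" using t0 tO by (simp add: J_def)
  have ac: "ac1 t" by (rule W_ac1[OF t])
  define u where "u = t * of_nat p powi (- v t)"
  have u: "J 1 (u - 1)" using ac unfolding ac1_def u_def by simp
  have uO: "J 0 u" using unit_norm[OF t0] unfolding u_def by (simp add: J_def)
  have "\<forall>i<n. ac_one p v (x ! i) \<and> v (x ! i) = int (nat (v t))"
  proof (intro allI impI)
    fix i assume i: "i < n"
    obtain z where z: "J 0 z" "x ! i = t * (1 + of_nat p * z)" using tz i by auto
    have w: "(1 + of_nat p * z :: 'k) \<noteq> 0 \<and> v (1 + of_nat p * z) = 0"
      using unit_term[of 1 z] z(1) p2 by (simp add: zdvd_not_zless)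
    have xv: "x ! i \<noteq> 0" "v (x ! i) = v t" using z(2) w t0 vmul[OF t0] by auto
    have "x ! i * of_nat p powi (- v (x ! i)) - 1 = t * (1 + of_nat p * z) * of_nat p powi (- v t) - 1"
      using xv(2) z(2) by simp
    also have "\<dots> = (u - 1) + u * (of_nat p * z)" unfolding u_def by (simp add: algebra_simps)
    finally have e: "x ! i * of_nat p powi (- v (x ! i)) - 1 = (u - 1) + u * (of_nat p * z)" .
    have "J 1 (u * (of_nat p * z))" using J_mult[OF uO J_pmult[OF z(1)]] by simp
    then have "J 1 ((u - 1) + u * (of_nat p * z))" using u J_add by blast
    then have "J 1 (x ! i * of_nat p powi (- v (x ! i)) - 1)" unfolding e .
    then show "ac_one p v (x ! i) \<and> v (x ! i) = int (nat (v t))"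
      unfolding ac_one_iff ac1_def using xv vt by simp
  qed
  then show "length x = n \<and> (\<exists>l::nat. \<forall>i<n. ac_one p v (x ! i) \<and> v (x ! i) = int l)" using len by blast
next
  assume "length x = n \<and> (\<exists>l::nat. \<forall>i<n. ac_one p v (x ! i) \<and> v (x ! i) = int l)"
  then obtain l where len: "length x = n" and l: "\<forall>i<n. ac_one p v (x ! i) \<and> v (x ! i) = int l" by blast
  define t where "t = (of_nat p :: 'k) ^ l"
  have t0: "t \<noteq> 0" unfolding t_def using pnz by simp
  have Wt: "W t" unfolding t_def by (rule W_pow)
  have "\<forall>a<n. \<exists>z. J 0 z \<and> x ! a - t * of_int (replicate n 1 ! a) = of_nat p * t * z"
  proof (intro allI impI)
    fix a assume a: "a < n"
    have ac: "x ! a \<noteq> 0" "J 1 (x ! a * of_nat p powi (- int l) - 1)"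
      using l a unfolding ac_one_iff ac1_def by auto
    have "(of_nat p :: 'k) powi (- int l) = inverse t" unfolding t_def by (simp add: power_int_minus)
    then have h: "J 1 (x ! a / t - 1)" using ac by (simp add: divide_inverse)
    define z where "z = (x ! a / t - 1) / of_nat p"
    have "J 0 z" unfolding z_def using J_pdiv[of 0] h by simp
    moreover have "x ! a - t * of_int (replicate n 1 ! a) = of_nat p * t * z"
      unfolding z_def using a t0 pnz by (simp add: field_simps)
    ultimately show "\<exists>z. J 0 z \<and> x ! a - t * of_int (replicate n 1 ! a) = of_nat p * t * z" by blast
  qed
  then show "x \<in> Qs n (replicate n 1)" unfolding Qs_def using len Wt by blast
qed

end


context pf begin

definition elem :: "nat \<Rightarrow> nat \<Rightarrow> int \<Rightarrow> int \<Rightarrow> 'k list \<Rightarrow> 'k list" where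
  "elem i j d c x = x[i := of_int d * x ! i + of_int c * x ! j]"

definition elem_inv :: "nat \<Rightarrow> nat \<Rightarrow> int \<Rightarrow> int \<Rightarrow> 'k list \<Rightarrow> 'k list" where
  "elem_inv i j d c y = y[i := (y ! i - of_int c * y ! j) / of_int d]"

definition belem :: "nat \<Rightarrow> nat \<Rightarrow> int \<Rightarrow> int \<Rightarrow> int list \<Rightarrow> int list" where
  "belem i j d c b = b[i := d * b ! i + c * b ! j]"

lemma Qs_mem: "x \<in> Qs n b \<longleftrightarrow> length x = n \<and> (\<exists>t. W t \<and> (\<forall>a<n. \<exists>z. J 0 z \<and> x ! a = t * of_int (b ! a) + of_nat p * t * z))"
  unfolding Qs_def by (simp add: diff_eq_eq add.commute)

lemma J_div_unit: "J 0 z \<Longrightarrow> \<not> int p dvd d \<Longrightarrow> J 0 (z / of_int d)"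
proof -
  assume z: "J 0 z" and d: "\<not> int p dvd d"
  have "d \<noteq> 0" using d by auto
  then have "of_int d \<noteq> (0 :: 'k)" by (rule ofint_nz)
  then show ?thesis using J_divv[of 0 "of_int d" z] z v_unit_int[OF d] by simp
qed


lemma elem_maps:
  assumes i: "i < n" and j: "j < n" and jc: "j = i \<longrightarrow> c = 0" and lb: "length b = n"
    and x: "x \<in> Qs n b"
  shows "elem i j d c x \<in> Qs n (belem i j d c b)"
proof -
  obtain t where len: "length x = n" and t: "W t" and tz: "\<forall>a<n. \<exists>z. J 0 z \<and> x ! a = t * of_int (b ! a) + of_nat p * t * z"
    using x unfolding Qs_mem by blast
  have "\<forall>a<n. \<exists>z. J 0 z \<and> elem i j d c x ! a = t * of_int (belem i j d c b ! a) + of_nat p * t * z"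
  proof (intro allI impI)
    fix a assume a: "a < n"
    show "\<exists>z. J 0 z \<and> elem i j d c x ! a = t * of_int (belem i j d c b ! a) + of_nat p * t * z"
    proof (cases "a = i")
      case False then show ?thesis using tz a len lb by (simp add: elem_def belem_def)
    next
      case True
      obtain zi where zi: "J 0 zi" "x ! i = t * of_int (b ! i) + of_nat p * t * zi" using tz i by blast
      obtain zj where zj: "J 0 zj" "x ! j = t * of_int (b ! j) + of_nat p * t * zj" using tz j by blast
      have "J 0 (of_int d * zi + of_int c * zj)" using J_mult[OF J_ofint zi(1)] J_mult[OF J_ofint zj(1)] J_add by fastforce
      moreover have "elem i j d c x ! a = t * of_int (belem i j d c b ! a) + of_nat p * t * (of_int d * zi + of_int c * zj)"
        using True i len lb unfolding elem_def belem_def by (simp add: zi(2) zj(2) algebra_simps)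
      ultimately show ?thesis by blast
    qed
  qed
  moreover have "length (elem i j d c x) = n" by (simp add: elem_def len)
  ultimately show ?thesis unfolding Qs_mem using t by blast
qed

lemma elem_inv_maps:
  assumes i: "i < n" and j: "j < n" and jc: "j = i \<longrightarrow> c = 0" and lb: "length b = n"
    and d: "\<not> int p dvd d"
    and y: "y \<in> Qs n (belem i j d c b)"
  shows "elem_inv i j d c y \<in> Qs n b"
proof -
  have d0: "(of_int d :: 'k) \<noteq> 0"
  proof -
    have "d \<noteq> 0" using d by (metis dvd_0_right)
    then show ?thesis by (rule ofint_nz)
  qed
  obtain t where len: "length y = n" and t: "W t" and tz: "\<forall>a<n. \<exists>z. J 0 z \<and> y ! a = t * of_int (belem i j d c b ! a) + of_nat p * t * z"
    using y unfolding Qs_mem by blast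
  have "\<forall>a<n. \<exists>z. J 0 z \<and> elem_inv i j d c y ! a = t * of_int (b ! a) + of_nat p * t * z"
  proof (intro allI impI)
    fix a assume a: "a < n"
    show "\<exists>z. J 0 z \<and> elem_inv i j d c y ! a = t * of_int (b ! a) + of_nat p * t * z"
    proof (cases "a = i")
      case False
      obtain z where "J 0 z" "y ! a = t * of_int (belem i j d c b ! a) + of_nat p * t * z" using tz a by blast
      moreover have "belem i j d c b ! a = b ! a" using False by (simp add: belem_def)
      ultimately show ?thesis using False by (auto simp: elem_inv_def)
    next
      case True
      obtain zi where zi: "J 0 zi" "y ! i = t * of_int (d * b ! i + c * b ! j) + of_nat p * t * zi"
        using tz i lb by (auto simp: belem_def)
      obtain zj where zj: "J 0 zj" "y ! j = t * of_int (belem i j d c b ! j) + of_nat p * t * zj" using tz j by blast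
      have cb: "c * belem i j d c b ! j = c * b ! j" using jc lb j by (cases "j = i") (auto simp: belem_def)
      have cb': "(of_int c :: 'k) * of_int (belem i j d c b ! j) = of_int c * of_int (b ! j)"
        using arg_cong[OF cb, of "of_int :: int \<Rightarrow> 'k"] by simp
      have "J 0 (zi - of_int c * zj)" using J_mult[OF J_ofint zj(1)] J_diff zi(1) by fastforce
      then have "J 0 ((zi - of_int c * zj) / of_int d)" using J_div_unit d by blast
      moreover have "elem_inv i j d c y ! a = t * of_int (b ! a) + of_nat p * t * ((zi - of_int c * zj) / of_int d)"
      proof -
        have yj: "of_int c * y ! j = t * (of_int c * of_int (b ! j)) + of_nat p * t * (of_int c * zj)"
        proof -
          have "of_int c * y ! j = t * (of_int c * of_int (belem i j d c b ! j)) + of_nat p * t * (of_int c * zj)"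
            by (simp add: zj(2) algebra_simps)
          then show ?thesis by (simp only: cb')
        qed
        have l: "y ! i - of_int c * y ! j = of_int d * t * of_int (b ! i) + of_nat p * t * (zi - of_int c * zj)"
          unfolding yj zi(2) by (simp add: algebra_simps)
        have r: "of_int d * (t * of_int (b ! i) + of_nat p * t * ((zi - of_int c * zj) / of_int d))
           = of_int d * t * of_int (b ! i) + of_nat p * t * (zi - of_int c * zj)"
          using d0 by (simp add: field_simps)
        have "y ! i - of_int c * y ! j = of_int d * (t * of_int (b ! i) + of_nat p * t * ((zi - of_int c * zj) / of_int d))"
          unfolding l r ..
        then show ?thesis using True i len d0 unfolding elem_inv_def by simp
      qed
      ultimately show ?thesis by blast
    qed
  qed
  moreover have "length (elem_inv i j d c y) = n" by (simp add: elem_inv_def len)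
  ultimately show ?thesis unfolding Qs_mem using t by blast
qed

lemma elem_bij:
  assumes i: "i < n" and j: "j < n" and jc: "j = i \<longrightarrow> c = 0" and lb: "length b = n"
    and d: "\<not> int p dvd d"
  shows "bij_betw (elem i j d c) (Qs n b) (Qs n (belem i j d c b))"
proof (rule bij_betw_byWitness[where f' = "elem_inv i j d c"])
  have d0: "(of_int d :: 'k) \<noteq> 0"
  proof -
    have "d \<noteq> 0" using d by (metis dvd_0_right)
    then show ?thesis by (rule ofint_nz)
  qed
  show "\<forall>a\<in>Qs n b. elem_inv i j d c (elem i j d c a) = a"
  proof
    fix x assume "x \<in> Qs n b"
    then have len: "length x = n" unfolding Qs_def by simp
    have cx: "of_int c * elem i j d c x ! j = of_int c * x ! j" using jc len j by (cases "j = i") (auto simp: elem_def)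
    show "elem_inv i j d c (elem i j d c x) = x"
      unfolding elem_inv_def cx using len i d0 by (simp add: elem_def)
  qed
  show "\<forall>a\<in>Qs n (belem i j d c b). elem i j d c (elem_inv i j d c a) = a"
  proof
    fix y assume "y \<in> Qs n (belem i j d c b)"
    then have len: "length y = n" unfolding Qs_def by simp
    have cy: "of_int c * elem_inv i j d c y ! j = of_int c * y ! j" using jc len j by (cases "j = i") (auto simp: elem_inv_def)
    show "elem i j d c (elem_inv i j d c y) = y"
      unfolding elem_def cy using len i d0 by (simp add: elem_inv_def)
  qed
  show "elem i j d c ` Qs n b \<subseteq> Qs n (belem i j d c b)" using elem_maps[OF i j jc lb] by blast
  show "elem_inv i j d c ` Qs n (belem i j d c b) \<subseteq> Qs n b" using elem_inv_maps[OF i j jc lb d] by blast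
qed

lemma Qs_len: "x \<in> Qs n b \<Longrightarrow> length x = n" unfolding Qs_def by simp

lemma Qs_open: "popen v n (Qs n b)"
  unfolding popen_def
proof (intro conjI ballI)
  show "Qs n b \<subseteq> {xs. length xs = n}" using Qs_len by blast
  fix x assume x: "x \<in> Qs n b"
  obtain t where len: "length x = n" and t: "W t" and tz: "\<forall>a<n. \<exists>z. J 0 z \<and> x ! a = t * of_int (b ! a) + of_nat p * t * z"
    using x unfolding Qs_mem by blast
  have t0: "t \<noteq> 0" using t W_def by blast
  have pt0: "of_nat p * t \<noteq> 0" using t0 pnz by simp
  have vpt: "v (of_nat p * t) = 1 + v t" using vmul[OF pnz t0] vp by simp
  show "\<exists>k. pball v n x k \<subseteq> Qs n b"
  proof (intro exI subsetI)
    fix y assume "y \<in> pball v n x (v t + 1)"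
    then have leny: "length y = n" and cl: "\<forall>a<n. J (v t + 1) (y ! a - x ! a)"
      unfolding pball_def vclose_J by auto
    have "\<forall>a<n. \<exists>z. J 0 z \<and> y ! a = t * of_int (b ! a) + of_nat p * t * z"
    proof (intro allI impI)
      fix a assume a: "a < n"
      obtain z where z: "J 0 z" "x ! a = t * of_int (b ! a) + of_nat p * t * z" using tz a by blast
      have "J (0 + v (of_nat p * t)) (y ! a - x ! a)" using cl a vpt by (simp add: add.commute)
      then have w: "J 0 ((y ! a - x ! a) / (of_nat p * t))" using J_divv pt0 by blast
      have e1: "of_nat p * t * (z + (y ! a - x ! a) / (of_nat p * t)) = of_nat p * t * z + (y ! a - x ! a)"
        using pt0 by (simp add: distrib_left)
      have "t * of_int (b ! a) + of_nat p * t * (z + (y ! a - x ! a) / (of_nat p * t))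
          = (t * of_int (b ! a) + of_nat p * t * z) + (y ! a - x ! a)" by (simp only: e1 add.assoc)
      also have "\<dots> = y ! a" by (simp add: z(2)[symmetric])
      finally have "y ! a = t * of_int (b ! a) + of_nat p * t * (z + (y ! a - x ! a) / (of_nat p * t))" by simp
      then show "\<exists>z. J 0 z \<and> y ! a = t * of_int (b ! a) + of_nat p * t * z" using J_add[OF z(1) w] by blast
    qed
    then show "y \<in> Qs n b" unfolding Qs_mem using leny t by blast
  qed
qed

lemma Qs_cong:
  assumes lb: "length b = n" "length b' = n" and c: "\<forall>a<n. int p dvd (b ! a - b' ! a)"
  shows "Qs n b \<subseteq> Qs n b'"
proof
  fix x assume x: "x \<in> Qs n b"
  obtain t where len: "length x = n" and t: "W t" and tz: "\<forall>a<n. \<exists>z. J 0 z \<and> x ! a = t * of_int (b ! a) + of_nat p * t * z"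
    using x unfolding Qs_mem by blast
  have "\<forall>a<n. \<exists>z. J 0 z \<and> x ! a = t * of_int (b' ! a) + of_nat p * t * z"
  proof (intro allI impI)
    fix a assume a: "a < n"
    obtain z where z: "J 0 z" "x ! a = t * of_int (b ! a) + of_nat p * t * z" using tz a by blast
    obtain q where q: "b ! a - b' ! a = int p * q" using c a by blast
    have "x ! a = t * of_int (b' ! a) + of_nat p * t * (z + of_int q)"
    proof -
      have "of_int (b ! a) = (of_int (b' ! a) + of_nat p * of_int q :: 'k)"
        using arg_cong[OF q, of "of_int :: int \<Rightarrow> 'k"] by (simp add: algebra_simps)
      then show ?thesis using z(2) by (simp add: algebra_simps)
    qed
    then show "\<exists>z. J 0 z \<and> x ! a = t * of_int (b' ! a) + of_nat p * t * z" using J_add[OF z(1) J_ofint] by blast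
  qed
  then show "x \<in> Qs n b'" unfolding Qs_mem using len t by blast
qed

end


fun zt :: "nat \<Rightarrow> nat set \<Rightarrow> tm \<Rightarrow> tm" where
  "zt N B (Var i) = (if i < N \<or> i \<in> B then Var i else Cst 0)"
| "zt N B (Cst c) = Cst c"
| "zt N B (Add s t) = Add (zt N B s) (zt N B t)"
| "zt N B (Mul s t) = Mul (zt N B s) (zt N B t)"
| "zt N B (Minus s) = Minus (zt N B s)"

fun zf :: "nat \<Rightarrow> nat set \<Rightarrow> fm \<Rightarrow> fm" where
  "zf N B (Eq s t) = Eq (zt N B s) (zt N B t)"
| "zf N B (InO t) = InO (zt N B t)"
| "zf N B (Not f) = Not (zf N B f)"
| "zf N B (Conj f g) = Conj (zf N B f) (zf N B g)"
| "zf N B (Ex i f) = Ex i (zf N (insert i B) f)"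

lemma zt_sem: "eval_tm e (zt N B t) = eval_tm (\<lambda>i. if i < N \<or> i \<in> B then e i else 0) t"
  by (induction t) auto

lemma zf_sem: "sat v e (zf N B f) = sat v (\<lambda>i. if i < N \<or> i \<in> B then e i else 0) f"
proof (induction f arbitrary: e B)
  case (Ex i f)
  show ?case
  proof -
    have "\<And>a. (\<lambda>j. if j < N \<or> j \<in> insert i B then (e(i := a)) j else 0)
        = (\<lambda>j. if j < N \<or> j \<in> B then e j else 0)(i := a)" by (auto simp: fun_eq_iff)
    then show ?thesis using Ex.IH by simp
  qed
qed (auto simp: zt_sem)

definition TT :: fm where "TT = Eq (Cst 0) (Cst 0)"
lemma sat_TT[simp]: "sat v e TT" by (simp add: TT_def)

definition Or :: "fm \<Rightarrow> fm \<Rightarrow> fm" where "Or f g = Not (Conj (Not f) (Not g))"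
lemma sat_Or[simp]: "sat v e (Or f g) \<longleftrightarrow> sat v e f \<or> sat v e g" by (simp add: Or_def)

definition conjs :: "fm list \<Rightarrow> fm" where "conjs fs = foldr Conj fs TT"
lemma sat_conjs[simp]: "sat v e (conjs fs) \<longleftrightarrow> (\<forall>f\<in>set fs. sat v e f)"
  unfolding conjs_def by (induction fs) auto

definition disjs :: "fm list \<Rightarrow> fm" where "disjs fs = foldr Or fs (Not TT)"
lemma sat_disjs[simp]: "sat v e (disjs fs) \<longleftrightarrow> (\<exists>f\<in>set fs. sat v e f)"
  unfolding disjs_def by (induction fs) auto

fun pow_tm :: "tm \<Rightarrow> nat \<Rightarrow> tm" where
  "pow_tm t 0 = Cst 1"
| "pow_tm t (Suc k) = Mul t (pow_tm t k)"

lemma eval_pow_tm[simp]: "eval_tm e (pow_tm t k) = eval_tm e t ^ k"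
  by (induction k) auto

definition fdef :: "('k::field \<Rightarrow> int) \<Rightarrow> nat \<Rightarrow> nat \<Rightarrow> 'k list set \<Rightarrow> bool" where
  "fdef v m n F \<longleftrightarrow> (\<exists>\<psi>. \<forall>e. sat v e \<psi> \<longleftrightarrow> map (\<lambda>a. e (m + a)) [0..<n] \<in> F)"

lemma fdef_union: "fdef v m n F \<Longrightarrow> fdef v m n G \<Longrightarrow> fdef v m n (F \<union> G)"
proof -
  assume "fdef v m n F" "fdef v m n G"
  then obtain \<phi> \<psi> where "\<forall>e. sat v e \<phi> \<longleftrightarrow> map (\<lambda>a. e (m + a)) [0..<n] \<in> F"
    "\<forall>e. sat v e \<psi> \<longleftrightarrow> map (\<lambda>a. e (m + a)) [0..<n] \<in> G" unfolding fdef_def by blast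
  then show ?thesis unfolding fdef_def by (intro exI[of _ "Or \<phi> \<psi>"]) simp
qed

lemma fdef_O: "fdef v m n {x. length x = n \<and> (\<forall>a<n. x ! a \<in> valring v)}"
  unfolding fdef_def by (intro exI[of _ "conjs (map (\<lambda>a. InO (Var (m + a))) [0..<n])"]) auto

lemma fdef_zero: "fdef v m n {replicate n 0}"
proof -
  have "\<And>e. (\<forall>a<n. e (m + a) = 0) \<longleftrightarrow> map (\<lambda>a. e (m + a)) [0..<n] = replicate n 0"
    by (auto simp: list_eq_iff_nth_eq)
  then show ?thesis unfolding fdef_def
    by (intro exI[of _ "conjs (map (\<lambda>a. Eq (Var (m + a)) (Cst 0)) [0..<n])"]) (simp add: atLeast0LessThan lessThan_def, blast)
qed

lemma robust_S:
  assumes "definable v m S"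
  shows "\<exists>\<psi>. \<forall>e. sat v e \<psi> \<longleftrightarrow> map e [0..<m] \<in> S"
proof -
  obtain \<phi> where S: "S \<subseteq> {xs. length xs = m}"
    and phi: "\<forall>xs. length xs = m \<longrightarrow> (xs \<in> S \<longleftrightarrow> sat v (\<lambda>i. if i < m then xs ! i else 0) \<phi>)"
    using assms unfolding definable_def by blast
  have "sat v e (zf m {} \<phi>) \<longleftrightarrow> map e [0..<m] \<in> S" for e
  proof -
    have "(\<lambda>i. if i < m \<or> i \<in> {} then e i else 0) = (\<lambda>i. if i < m then map e [0..<m] ! i else 0)"
      by (auto simp: fun_eq_iff)
    then show ?thesis using phi[rule_format, of "map e [0..<m]"] by (simp add: zf_sem)
  qed
  then show ?thesis by blast
qed

lemma cat_image_iff: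
  assumes "S \<subseteq> {xs. length xs = m}" "F \<subseteq> {xs. length xs = n}"
  shows "xs \<in> (\<lambda>(s, x). s @ x) ` (S \<times> F) \<longleftrightarrow> length xs = m + n \<and> take m xs \<in> S \<and> drop m xs \<in> F"
proof
  assume "xs \<in> (\<lambda>(s, x). s @ x) ` (S \<times> F)"
  then obtain s x where "xs = s @ x" "s \<in> S" "x \<in> F" by auto
  then show "length xs = m + n \<and> take m xs \<in> S \<and> drop m xs \<in> F" using assms by force
next
  assume h: "length xs = m + n \<and> take m xs \<in> S \<and> drop m xs \<in> F"
  then have "xs = (\<lambda>(s, x). s @ x) (take m xs, drop m xs)" by simp
  then show "xs \<in> (\<lambda>(s, x). s @ x) ` (S \<times> F)" using h by blast
qed

lemma map_assign: "length xs = N \<Longrightarrow> k + l \<le> N \<Longrightarrow>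
   map (\<lambda>a. (\<lambda>i. if i < N then xs ! i else 0) (k + a)) [0..<l] = take l (drop k xs)"
  by (auto simp: list_eq_iff_nth_eq)

lemma prod_definable:
  assumes S: "definable v m S" and F: "fdef v m n F" and Fl: "F \<subseteq> {xs. length xs = n}"
  shows "definable v (m + n) ((\<lambda>(s, x). s @ x) ` (S \<times> F))"
proof -
  have Sl: "S \<subseteq> {xs. length xs = m}" using S unfolding definable_def by blast
  obtain \<psi> where psi: "\<forall>e. sat v e \<psi> \<longleftrightarrow> map e [0..<m] \<in> S" using robust_S[OF S] by blast
  obtain \<phi> where phi: "\<forall>e. sat v e \<phi> \<longleftrightarrow> map (\<lambda>a. e (m + a)) [0..<n] \<in> F" using F unfolding fdef_def by blast
  show ?thesis unfolding definable_def
  proof (intro conjI exI[of _ "Conj \<psi> \<phi>"] allI impI)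
    show "(\<lambda>(s, x). s @ x) ` (S \<times> F) \<subseteq> {xs. length xs = m + n}" using Sl Fl by force
    fix xs :: "'a list" assume l: "length xs = m + n"
    have e1: "map (\<lambda>i. if i < m + n then xs ! i else 0) [0..<m] = take m xs"
      using l by (auto simp: list_eq_iff_nth_eq)
    have e2: "map (\<lambda>a. (\<lambda>i. if i < m + n then xs ! i else 0) (m + a)) [0..<n] = drop m xs"
      using map_assign[OF l, of m n] l by simp
    show "xs \<in> (\<lambda>(s, x). s @ x) ` (S \<times> F) \<longleftrightarrow> sat v (\<lambda>i. if i < m + n then xs ! i else 0) (Conj \<psi> \<phi>)"
      unfolding cat_image_iff[OF Sl Fl] using psi phi e1 e2 l by simp
  qed
qed



context pf begin

definition Qfm :: "nat \<Rightarrow> nat \<Rightarrow> int list \<Rightarrow> fm" where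
  "Qfm m n b = (let T = m + n; Y = Suc (m + n); Z = Suc (Suc (m + n)) in
     Ex T (Ex Y (Conj (Not (Eq (Var T) (Cst 0))) (Conj (InO (Var T))
       (Conj (disjs (map (\<lambda>j. Eq (Var T) (Mul (pow_tm (Cst (int p)) j) (pow_tm (Var Y) (p - 1)))) [0..<p - 1]))
         (conjs (map (\<lambda>a. Ex Z (Conj (InO (Var Z))
             (Eq (Var (m + a)) (Add (Mul (Var T) (Cst (b ! a))) (Mul (Mul (Cst (int p)) (Var T)) (Var Z))))))
           [0..<n])))))))"

lemma sat_Qfm: "sat v e (Qfm m n b) \<longleftrightarrow>
   (\<exists>t y. t \<noteq> 0 \<and> J 0 t \<and> (\<exists>j<p - 1. t = of_nat p ^ j * y ^ (p - 1)) \<and>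
      (\<forall>a<n. \<exists>z. J 0 z \<and> e (m + a) = t * of_int (b ! a) + of_nat p * t * z))"
  unfolding Qfm_def Let_def by (auto simp: valring_J atLeast0LessThan)

lemma fdef_Qs: "fdef v m n (Qs n b)"
  unfolding fdef_def
proof (intro exI allI)
  fix e
  show "sat v e (Qfm m n b) \<longleftrightarrow> map (\<lambda>a. e (m + a)) [0..<n] \<in> Qs n b"
    unfolding sat_Qfm Qs_mem W_def by auto
qed

lemma graph_iff:
  assumes "S \<subseteq> {xs. length xs = m}" "F \<subseteq> {xs. length xs = n}" "\<And>x. x \<in> F \<Longrightarrow> length (f x) = n"
  shows "xs \<in> {s @ x @ f x | s x. (s, x) \<in> S \<times> F} \<longleftrightarrow>
     length xs = m + n + n \<and> take m xs \<in> S \<and> take n (drop m xs) \<in> F \<and> drop (m + n) xs = f (take n (drop m xs))"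
proof
  assume "xs \<in> {s @ x @ f x | s x. (s, x) \<in> S \<times> F}"
  then obtain s x where "xs = s @ x @ f x" "s \<in> S" "x \<in> F" by auto
  then show "length xs = m + n + n \<and> take m xs \<in> S \<and> take n (drop m xs) \<in> F \<and> drop (m + n) xs = f (take n (drop m xs))"
    using assms by force
next
  assume h: "length xs = m + n + n \<and> take m xs \<in> S \<and> take n (drop m xs) \<in> F \<and> drop (m + n) xs = f (take n (drop m xs))"
  have "xs = take m xs @ take n (drop m xs) @ drop (m + n) xs"
    by (metis append_take_drop_id add.commute drop_drop)
  then have "xs = take m xs @ take n (drop m xs) @ f (take n (drop m xs))" using h by simp
  then show "xs \<in> {s @ x @ f x | s x. (s, x) \<in> S \<times> F}" using h by blast
qed

lemma graph_definable:
  assumes S: "definable v m S" and F: "fdef v m n F" and Fl: "F \<subseteq> {xs. length xs = n}"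
    and i: "i < n" and j: "j < n"
  shows "definable v (m + n + n) {s @ x @ elem i j d c x | s x. (s, x) \<in> S \<times> F}"
proof -
  have Sl: "S \<subseteq> {xs. length xs = m}" using S unfolding definable_def by blast
  obtain \<psi> where psi: "\<forall>e. sat v e \<psi> \<longleftrightarrow> map e [0..<m] \<in> S" using robust_S[OF S] by blast
  obtain \<phi> where phi: "\<forall>e. sat v e \<phi> \<longleftrightarrow> map (\<lambda>a. e (m + a)) [0..<n] \<in> F" using F unfolding fdef_def by blast
  define G where "G = conjs (map (\<lambda>a. Eq (Var (m + n + a))
     (if a = i then Add (Mul (Cst d) (Var (m + i))) (Mul (Cst c) (Var (m + j))) else Var (m + a))) [0..<n])"
  have fl: "\<And>x. length (elem i j d c x) = length x" by (simp add: elem_def)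
  show ?thesis unfolding definable_def
  proof (intro conjI exI[of _ "Conj \<psi> (Conj \<phi> G)"] allI impI)
    show "{s @ x @ elem i j d c x | s x. (s, x) \<in> S \<times> F} \<subseteq> {xs. length xs = m + n + n}"
      using Sl Fl by (force simp: fl)
    fix xs :: "'k list" assume l: "length xs = m + n + n"
    define e where "e = (\<lambda>i. if i < m + n + n then xs ! i else (0::'k))"
    have e1: "map e [0..<m] = take m xs"
      using l by (auto simp: list_eq_iff_nth_eq e_def)
    have e2: "map (\<lambda>a. e (m + a)) [0..<n] = take n (drop m xs)"
      using l by (auto simp: list_eq_iff_nth_eq e_def)
    have e3: "sat v e G \<longleftrightarrow> drop (m + n) xs = elem i j d c (take n (drop m xs))"
    proof -
      have "sat v e G \<longleftrightarrow> (\<forall>a<n. xs ! (m + n + a) =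
           (if a = i then of_int d * xs ! (m + i) + of_int c * xs ! (m + j) else xs ! (m + a)))"
        unfolding G_def e_def using l i j by (auto simp: atLeast0LessThan)
      also have "\<dots> \<longleftrightarrow> drop (m + n) xs = elem i j d c (take n (drop m xs))"
        unfolding elem_def using l i j by (auto simp: list_eq_iff_nth_eq nth_list_update)
      finally show ?thesis .
    qed
    have fl': "\<And>x. x \<in> F \<Longrightarrow> length (elem i j d c x) = n" using fl Fl by auto
    have "sat v e (Conj \<psi> (Conj \<phi> G)) \<longleftrightarrow> take m xs \<in> S \<and> take n (drop m xs) \<in> F \<and> drop (m + n) xs = elem i j d c (take n (drop m xs))"
      using psi phi e1 e2 e3 by simp
    then show "xs \<in> {s @ x @ elem i j d c x | s x. (s, x) \<in> S \<times> F} \<longleftrightarrow> sat v (\<lambda>i. if i < m + n + n then xs ! i else 0) (Conj \<psi> (Conj \<phi> G))"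
      using graph_iff[OF Sl Fl fl', where xs = xs] l by (simp add: e_def[symmetric])
  qed
qed

end


context pf begin

lemma haar_fin:
  assumes n: "n \<ge> 1" and A: "A \<subseteq> {x. length x = n \<and> (\<forall>a<n. J 0 (x ! a))}"
  shows "haar p v n A < Orderings.top"
proof -
  define ck where "ck = ((\<lambda>i::nat. replicate n (0::'k)), (\<lambda>i::nat. int i))"
  have mem: "ck \<in> {(c, k). (\<forall>i. length (c i) = n) \<and> A \<subseteq> (\<Union>i. pball v n (c i) (k i))}"
  proof -
    have "A \<subseteq> pball v n (replicate n 0) 0" using A by (auto simp: pball_def vclose_J)
    moreover have "pball v n (replicate n 0) (int 0) \<subseteq> (\<Union>i. pball v n (replicate n (0::'k)) (int i))"
      by (rule UN_upper) simp
    ultimately have "A \<subseteq> (\<Union>i. pball v n (replicate n 0) (int i))" by simp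
    then show ?thesis unfolding ck_def by simp
  qed
  have p0: "real p > 1" using p2 by simp
  define r where "r = inverse (real p ^ n)"
  have r: "0 \<le> r" "r < 1" unfolding r_def using p0 n by (auto simp: inverse_less_1_iff one_less_power)
  have eq: "real p powr (- real_of_int (int i) * real n) = r ^ i" for i
  proof -
    have "real p powr (- real_of_int (int i) * real n) = inverse (real p powr (real (i * n)))"
      by (simp add: powr_minus[symmetric])
    also have "\<dots> = inverse (real p ^ (i * n))" using p0 powr_realpow[of "real p" "i * n"] by simp
    also have "\<dots> = r ^ i" unfolding r_def by (simp add: power_mult[symmetric] mult.commute power_inverse)
    finally show ?thesis .
  qed
  have "(\<Sum>i. ennreal (real p powr (- real_of_int (snd ck i) * real n))) = (\<Sum>i. ennreal (r ^ i))"
    unfolding ck_def snd_conv eq by (rule refl)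
  also have "\<dots> \<noteq> Orderings.top"
  proof (rule ennreal_suminf_neq_top)
    show "summable (\<lambda>i. r ^ i)" using r by (intro summable_geometric) simp
    show "\<And>i. 0 \<le> r ^ i" using r by simp
  qed
  finally have lt: "(\<Sum>i. ennreal (real p powr (- real_of_int (snd ck i) * real n))) < Orderings.top"
    using top.not_eq_extremum by blast
  have "haar p v n A \<le> (\<Sum>i. ennreal (real p powr (- real_of_int (snd ck i) * real n)))"
    unfolding haar_def using mem by (rule INF_lower)
  then show ?thesis using lt by (rule le_less_trans)
qed

lemma dim_ge0: "A \<noteq> {} \<Longrightarrow> dim_ge v n A 0"
  unfolding dim_ge_def has_interior_def pball_def by (intro exI[of _ "[]"]) auto

lemma dim_ge_single: "dim_ge v n {z} d \<Longrightarrow> d = 0"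
proof (rule ccontr)
  assume h: "dim_ge v n {z} d" and d: "d \<noteq> 0"
  then obtain I where I: "length I = d" and hi: "has_interior v d ((\<lambda>xs. map (\<lambda>i. xs ! i) I) ` {z})"
    unfolding dim_ge_def by blast
  define w where "w = map (\<lambda>i. z ! i) I"
  obtain k where k: "pball v d w k \<subseteq> {w}" using hi unfolding has_interior_def w_def by auto
  define y where "y = w[0 := w ! 0 + of_nat p powi k]"
  have pk: "(of_nat p :: 'k) powi k \<noteq> 0" using pnz by (simp add: power_int_not_zero)
  have lw: "length w = d" unfolding w_def using I by simp
  have "y \<in> pball v d w k"
    unfolding pball_def vclose_J y_def using lw vppi pk by (auto simp: nth_list_update J_def)
  moreover have "y \<noteq> w"
  proof
    assume "y = w"
    then have "y ! 0 = w ! 0" by simp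
    then show False unfolding y_def using lw d pk by simp
  qed
  ultimately show False using k by blast
qed

lemma pdim_single: "pdim v n {z} = 0"
proof -
  have "(GREATEST d. dim_ge v n {z} d) = 0"
    by (rule Greatest_equality) (auto intro: dim_ge0 dest: dim_ge_single)
  then show ?thesis unfolding pdim_def by simp
qed

definition Dm :: "nat \<Rightarrow> nat \<Rightarrow> int \<Rightarrow> int \<Rightarrow> nat \<Rightarrow> nat \<Rightarrow> 'k" where
  "Dm i j d c a b = (if a = b then (if a = i then of_int d else 1) else if a = i \<and> b = j then of_int c else 0)"

lemma Dm_sum:
  assumes a: "a < n" and j: "j < n"
  shows "(\<Sum>b<n. Dm i j d c a b * w b) = (if a = i then of_int d * w i + (if j \<noteq> i then of_int c * w j else 0) else w a)"
proof (cases "a = i")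
  case False
  have "(\<Sum>b<n. Dm i j d c a b * w b) = (\<Sum>b<n. if a = b then w a else 0)"
    by (rule sum.cong[OF refl]) (simp add: Dm_def False)
  also have "\<dots> = w a" using a by simp
  finally show ?thesis using False by simp
next
  case True
  show ?thesis
  proof (cases "j = i")
    case True
    have "(\<Sum>b<n. Dm i j d c a b * w b) = (\<Sum>b<n. if a = b then of_int d * w a else 0)"
      by (rule sum.cong[OF refl]) (simp add: Dm_def True \<open>a = i\<close>)
    also have "\<dots> = of_int d * w a" using a by simp
    finally show ?thesis using True \<open>a = i\<close> by simp
  next
    case False
    have "(\<Sum>b<n. Dm i j d c a b * w b) = (\<Sum>b<n. (if a = b then of_int d * w a else 0) + (if j = b then of_int c * w j else 0))"
      by (rule sum.cong[OF refl]) (auto simp: Dm_def False \<open>a = i\<close>)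
    also have "\<dots> = (\<Sum>b<n. if a = b then of_int d * w a else 0) + (\<Sum>b<n. if j = b then of_int c * w j else 0)"
      by (rule sum.distrib)
    also have "\<dots> = of_int d * w a + of_int c * w j" using a j by simp
    finally show ?thesis using False \<open>a = i\<close> by simp
  qed
qed

lemma foldr_max_nonneg: "(0::real) \<le> foldr max xs 0"
  by (induction xs) (auto simp: le_max_iff_disj)

lemma pnorm_nonneg: "pnorm p v xs \<ge> 0"
  unfolding pnorm_def by (rule foldr_max_nonneg)

lemma pnorm_zero: "(\<forall>a<length xs. xs ! a = 0) \<Longrightarrow> pnorm p v xs = 0"
proof (induction xs)
  case Nil then show ?case by (simp add: pnorm_def)
next
  case (Cons x xs)
  then have "x = 0" "\<forall>a<length xs. xs ! a = 0" by auto
  then show ?case using Cons.IH foldr_max_nonneg[of "map (pabs p v) xs"] by (simp add: pnorm_def pabs_def)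
qed

lemma nth_list_diff: "a < length xs \<Longrightarrow> a < length ys \<Longrightarrow> list_diff xs ys ! a = xs ! a - ys ! a"
  by (simp add: list_diff_def)

lemma length_list_diff[simp]: "length (list_diff xs ys) = min (length xs) (length ys)"
  by (simp add: list_diff_def)

lemma nth_mat_app: "a < n \<Longrightarrow> mat_app n M w ! a = (\<Sum>b<n. M a b * w ! b)"
  by (simp add: mat_app_def)

lemma length_mat_app[simp]: "length (mat_app n M w) = n"
  by (simp add: mat_app_def)

lemma length_elem[simp]: "length (elem i j d c x) = length x"
  by (simp add: elem_def)

lemma elem_C1:
  assumes U: "U \<subseteq> {xs. length xs = n}" and i: "i < n" and j: "j < n" and jc: "j = i \<longrightarrow> c = 0"
  shows "C1_with_jac p v n U (elem i j d c) (\<lambda>x. Dm i j d c)"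
  unfolding C1_with_jac_def
proof (intro conjI ballI allI impI)
  fix x e assume x: "x \<in> U" and e: "(e::real) > 0"
  show "\<exists>\<delta>>0. \<forall>y\<in>U. pnorm p v (list_diff y x) < \<delta> \<longrightarrow>
        pnorm p v (list_diff (list_diff (elem i j d c y) (elem i j d c x)) (mat_app n (Dm i j d c) (list_diff y x)))
          \<le> e * pnorm p v (list_diff y x)"
  proof (intro exI[of _ 1] conjI ballI impI)
    fix y assume y: "y \<in> U"
    have lx: "length x = n" and ly: "length y = n" using x y U by auto
    have "pnorm p v (list_diff (list_diff (elem i j d c y) (elem i j d c x)) (mat_app n (Dm i j d c) (list_diff y x))) = 0"
    proof (rule pnorm_zero, intro allI impI)
      fix a assume "a < length (list_diff (list_diff (elem i j d c y) (elem i j d c x)) (mat_app n (Dm i j d c) (list_diff y x)))"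
      then have a: "a < n" using lx ly by simp
      have ld: "\<And>b. b < n \<Longrightarrow> list_diff y x ! b = y ! b - x ! b" using lx ly by (simp add: nth_list_diff)
      have s: "(\<Sum>b<n. Dm i j d c a b * list_diff y x ! b) = (if a = i then of_int d * (y ! i - x ! i) + (if j \<noteq> i then of_int c * (y ! j - x ! j) else 0) else y ! a - x ! a)"
        using Dm_sum[OF a j, of i d c "\<lambda>b. list_diff y x ! b"] ld[OF i] ld[OF j] ld[OF a] by simp
      have "list_diff (list_diff (elem i j d c y) (elem i j d c x)) (mat_app n (Dm i j d c) (list_diff y x)) ! a
         = (elem i j d c y ! a - elem i j d c x ! a) - (\<Sum>b<n. Dm i j d c a b * list_diff y x ! b)"
        using a lx ly by (simp add: nth_list_diff nth_mat_app)
      also have "\<dots> = 0"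
      proof (cases "a = i")
        case False then show ?thesis unfolding s using a lx ly by (simp add: elem_def)
      next
        case True
        show ?thesis
        proof (cases "j = i")
          case True then show ?thesis unfolding s using \<open>a = i\<close> a lx ly jc by (simp add: elem_def algebra_simps)
        next
          case False
          have "elem i j d c y ! a - elem i j d c x ! a = (of_int d * y ! i + of_int c * y ! j) - (of_int d * x ! i + of_int c * x ! j)"
            using \<open>a = i\<close> a lx ly False by (simp add: elem_def)
          then show ?thesis unfolding s using \<open>a = i\<close> False by (simp add: algebra_simps)
        qed
      qed
      finally show "list_diff (list_diff (elem i j d c y) (elem i j d c x)) (mat_app n (Dm i j d c) (list_diff y x)) ! a = 0" .
    qed
    then show "pnorm p v (list_diff (list_diff (elem i j d c y) (elem i j d c x)) (mat_app n (Dm i j d c) (list_diff y x)))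
          \<le> e * pnorm p v (list_diff y x)" using e pnorm_nonneg by simp
  qed simp
next
  fix x a b e assume "(e::real) > 0"
  then show "\<exists>\<delta>>0. \<forall>y\<in>U. pnorm p v (list_diff y x) < \<delta> \<longrightarrow> pabs p v (Dm i j d c a b - Dm i j d c a b) < e"
    by (intro exI[of _ 1]) (simp add: pabs_def)
qed

lemma det_Dm:
  assumes i: "i < n"
  shows "det_n n (Dm i j d c) = of_int d"
proof -
  let ?P = "{\<sigma>. \<sigma> permutes {..<n}}"
  have z: "(\<Prod>a<n. Dm i j d c a (\<sigma> a)) = 0" if s: "\<sigma> \<in> ?P" "\<sigma> \<noteq> id" for \<sigma>
  proof -
    have sp: "\<sigma> permutes {..<n}" using s(1) by simp
    have "\<exists>a<n. a \<noteq> i \<and> \<sigma> a \<noteq> a"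
    proof (rule ccontr)
      assume nn: "\<not> (\<exists>a<n. a \<noteq> i \<and> \<sigma> a \<noteq> a)"
      have fix1: "\<sigma> a = a" if "a \<noteq> i" for a
      proof (cases "a < n")
        case True then show ?thesis using nn that by blast
      next
        case False then show ?thesis using permutes_not_in[OF sp] by simp
      qed
      have si: "\<sigma> i \<noteq> i"
      proof
        assume "\<sigma> i = i"
        have "\<sigma> = id"
        proof (rule ext)
          fix x show "\<sigma> x = id x" using fix1 \<open>\<sigma> i = i\<close> by (cases "x = i") auto
        qed
        then show False using s(2) by simp
      qed
      then have "\<sigma> (\<sigma> i) = \<sigma> i" using fix1 by blast
      then have "\<sigma> i = i" using permutes_inj[OF sp] by (simp add: inj_eq)
      then show False using si by simp
    qed
    then obtain a where a: "a < n" "a \<noteq> i" "\<sigma> a \<noteq> a" by blast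
    have "Dm i j d c a (\<sigma> a) = 0" using a unfolding Dm_def by auto
    then show ?thesis using a by (intro prod_zero) auto
  qed
  have "det_n n (Dm i j d c) = (\<Sum>\<sigma>\<in>?P. if \<sigma> = id then of_int (sign \<sigma>) * (\<Prod>a<n. Dm i j d c a (\<sigma> a)) else 0)"
    unfolding det_n_def by (rule sum.cong) (auto simp: z)
  also have "\<dots> = of_int (sign (id :: nat \<Rightarrow> nat)) * (\<Prod>a<n. Dm i j d c a a)"
    using permutes_id[of "{..<n}"] finite_permutations[of "{..<n}"] by simp
  also have "(\<Prod>a<n. Dm i j d c a a) = (\<Prod>a<n. if a = i then of_int d else 1)"
    unfolding Dm_def by simp
  also have "\<dots> = of_int d" using i by simp
  finally show ?thesis by (simp add: sign_id)
qed

lemma pabs_unit: "\<not> int p dvd d \<Longrightarrow> pabs p v (of_int d :: 'k) = 1"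
proof -
  assume d: "\<not> int p dvd d"
  then have "d \<noteq> 0" by (metis dvd_0_right)
  then have "(of_int d :: 'k) \<noteq> 0" by (rule ofint_nz)
  then show ?thesis using v_unit_int[OF d] p2 by (simp add: pabs_def)
qed

end


locale pfS = pf p v for p :: nat and v :: "'k::field \<Rightarrow> int" +
  fixes S :: "'k list set" and m :: nat
  assumes defS: "definable v m S"
begin

abbreviation G where "G \<equiv> rel_subgroup p v m S"

lemma G_zero: "(\<lambda>_. 0) \<in> G" by (rule rel_subgroup.zero)
lemma G_diff: "a \<in> G \<Longrightarrow> b \<in> G \<Longrightarrow> (\<lambda>g. a g - b g) \<in> G" by (rule rel_subgroup.diff)
lemma G_neg: "a \<in> G \<Longrightarrow> (\<lambda>g. - a g) \<in> G" using G_diff[OF G_zero] by simp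
lemma G_add: "a \<in> G \<Longrightarrow> b \<in> G \<Longrightarrow> (\<lambda>g. a g + b g) \<in> G"
  using G_diff[of a "\<lambda>g. - b g"] G_neg by simp

lemma G_sum: "finite B \<Longrightarrow> (\<And>x. x \<in> B \<Longrightarrow> f x \<in> G) \<Longrightarrow> (\<lambda>g. \<Sum>x\<in>B. f x g) \<in> G"
proof (induction B rule: finite_induct)
  case empty then show ?case using G_zero by simp
next
  case (insert x B)
  then have "(\<lambda>g. f x g + (\<Sum>x\<in>B. f x g)) \<in> G" using G_add[of "f x" "\<lambda>g. \<Sum>x\<in>B. f x g"] by blast
  then show ?case using insert by simp
qed

definition eqv :: "('k gen \<Rightarrow> int) \<Rightarrow> ('k gen \<Rightarrow> int) \<Rightarrow> bool" where
  "eqv a b \<longleftrightarrow> (\<lambda>g. a g - b g) \<in> G"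

lemma eqv_refl: "eqv a a" unfolding eqv_def using G_zero by simp
lemma eqv_sym: "eqv a b \<Longrightarrow> eqv b a" unfolding eqv_def using G_neg by fastforce
lemma eqv_trans: "eqv a b \<Longrightarrow> eqv b c \<Longrightarrow> eqv a c"
  unfolding eqv_def using G_add[of "\<lambda>g. a g - b g" "\<lambda>g. b g - c g"] by simp
lemma eqv_add: "eqv a b \<Longrightarrow> eqv c d \<Longrightarrow> eqv (\<lambda>g. a g + c g) (\<lambda>g. b g + d g)"
  unfolding eqv_def using G_add[of "\<lambda>g. a g - b g" "\<lambda>g. c g - d g"] by (simp add: algebra_simps)
lemma eqv_sum: "finite B \<Longrightarrow> (\<And>x. x \<in> B \<Longrightarrow> eqv (f x) (h x)) \<Longrightarrow> eqv (\<lambda>g. \<Sum>x\<in>B. f x g) (\<lambda>g. \<Sum>x\<in>B. h x g)"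
  unfolding eqv_def using G_sum[of B "\<lambda>x g. f x g - h x g"] by (simp add: sum_subtractf)

definition On :: "nat \<Rightarrow> 'k list set" where
  "On k = {x. length x = k \<and> (\<forall>a<k. x ! a \<in> valring v)}"

lemma On_J: "On k = {x. length x = k \<and> (\<forall>a<k. J 0 (x ! a))}"
  unfolding On_def valring_J by simp

lemma Sl: "S \<subseteq> {xs. length xs = m}" using defS unfolding definable_def by blast

lemma fibre_prod: "s \<in> S \<Longrightarrow> fibre (S \<times> F) s = F" unfolding fibre_def by auto

lemma adm_prod:
  assumes n: "n \<ge> 1" and F: "fdef v m n F" and FO: "F \<subseteq> On n"
  shows "admissible p v m S n (S \<times> F)"
  unfolding admissible_def
proof (intro conjI ballI)
  show "S \<times> F \<subseteq> {(s, x). s \<in> S \<and> length x = n}" using FO unfolding On_def by auto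
  show "definable v (m + n) ((\<lambda>(s, x). s @ x) ` (S \<times> F))"
    using prod_definable[OF defS F] FO unfolding On_def by auto
  fix s assume "s \<in> S"
  then show "haar p v n (fibre (S \<times> F) s) < Orderings.top"
    unfolding fibre_prod[OF \<open>s \<in> S\<close>] using haar_fin[OF n] FO unfolding On_J by blast
qed

lemma fdef_empty: "fdef v m n {}"
  unfolding fdef_def by (intro exI[of _ "Not TT"]) simp

lemma R1_prod:
  assumes n: "n \<ge> 1" and F1: "fdef v m n F1" "F1 \<subseteq> On n" and F2: "fdef v m n F2" "F2 \<subseteq> On n"
    and dj: "F1 \<inter> F2 = {}"
  shows "eqv (gsym (n, S \<times> (F1 \<union> F2))) (\<lambda>g. gsym (n, S \<times> F1) g + gsym (n, S \<times> F2) g)"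
proof -
  have "(\<lambda>g. gsym (n, (S \<times> F1) \<union> (S \<times> F2)) g - gsym (n, S \<times> F1) g - gsym (n, S \<times> F2) g) \<in> G"
    by (rule rel_subgroup.R1[OF adm_prod[OF n F1] adm_prod[OF n F2]]) (use dj in auto)
  moreover have "S \<times> (F1 \<union> F2) = (S \<times> F1) \<union> (S \<times> F2)" by auto
  ultimately show ?thesis unfolding eqv_def by (simp add: algebra_simps)
qed

lemma R2_empty:
  assumes n: "n \<ge> 1"
  shows "gsym (n, S \<times> ({} :: 'k list set)) \<in> G"
proof (rule rel_subgroup.R2)
  show "admissible p v m S n (S \<times> {})" using adm_prod[OF n fdef_empty] by simp
  show "\<forall>s\<in>S. pdim v n (fibre (S \<times> ({} :: 'k list set)) s) < int n"
    using n by (simp add: fibre_def pdim_def)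
qed

lemma R2_zero:
  assumes n: "n \<ge> 1"
  shows "gsym (n, S \<times> {replicate n (0::'k)}) \<in> G"
proof (rule rel_subgroup.R2)
  show "admissible p v m S n (S \<times> {replicate n 0})"
    using adm_prod[OF n fdef_zero] by (simp add: On_J)
  show "\<forall>s\<in>S. pdim v n (fibre (S \<times> {replicate n (0::'k)}) s) < int n"
    using n pdim_single by (simp add: fibre_prod)
qed

lemma fdef_UN: "finite B \<Longrightarrow> (\<And>b. b \<in> B \<Longrightarrow> fdef v m n (F b)) \<Longrightarrow> fdef v m n (\<Union>b\<in>B. F b)"
  by (induction B rule: finite_induct) (auto intro: fdef_union fdef_empty)

lemma R1_UN:
  assumes n: "n \<ge> 1" and fin: "finite B" and F: "\<And>b. b \<in> B \<Longrightarrow> fdef v m n (F b)"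
    and FO: "\<And>b. b \<in> B \<Longrightarrow> F b \<subseteq> On n"
    and dj: "\<And>b b'. b \<in> B \<Longrightarrow> b' \<in> B \<Longrightarrow> b \<noteq> b' \<Longrightarrow> F b \<inter> F b' = {}"
  shows "eqv (gsym (n, S \<times> (\<Union>b\<in>B. F b))) (\<lambda>g. \<Sum>b\<in>B. gsym (n, S \<times> F b) g)"
  using fin F FO dj
proof (induction B rule: finite_induct)
  case empty then show ?case using R2_empty[OF n] unfolding eqv_def by simp
next
  case (insert x B)
  have U: "fdef v m n (\<Union>b\<in>B. F b)" using fdef_UN[OF insert(1)] insert(4) by blast
  have UO: "(\<Union>b\<in>B. F b) \<subseteq> On n" using insert(5) by blast
  have d: "F x \<inter> (\<Union>b\<in>B. F b) = {}" using insert(2) insert(6) by fastforce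
  have "eqv (gsym (n, S \<times> (F x \<union> (\<Union>b\<in>B. F b)))) (\<lambda>g. gsym (n, S \<times> F x) g + gsym (n, S \<times> (\<Union>b\<in>B. F b)) g)"
    by (rule R1_prod[OF n insert(4)[of x] insert(5)[of x] U UO d]) auto
  moreover have "eqv (\<lambda>g. gsym (n, S \<times> F x) g + gsym (n, S \<times> (\<Union>b\<in>B. F b)) g)
                    (\<lambda>g. gsym (n, S \<times> F x) g + (\<Sum>b\<in>B. gsym (n, S \<times> F b) g))"
    by (rule eqv_add[OF eqv_refl insert(3)]) (use insert in auto)
  ultimately show ?case using insert(1,2) by (simp add: eqv_trans)
qed

lemma unit_fam_On: "unit_fam v S = S \<times> On 1"
proof (rule Set.set_eqI)
  fix sx :: "'k list \<times> 'k list"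
  obtain s x where sx: "sx = (s, x)" by force
  have "x \<in> On 1 \<longleftrightarrow> (\<exists>z. x = [z] \<and> z \<in> valring v)"
    unfolding On_def by (cases x) auto
  then show "sx \<in> unit_fam v S \<longleftrightarrow> sx \<in> S \<times> On 1" unfolding unit_fam_def sx by auto
qed

lemma times_O_On: "fam_times_O v (S \<times> On k) = S \<times> On (Suc k)"
proof (rule Set.set_eqI)
  fix sy :: "'k list \<times> 'k list"
  obtain s y where sy: "sy = (s, y)" by force
  have "y \<in> On (Suc k) \<longleftrightarrow> (\<exists>x z. y = x @ [z] \<and> x \<in> On k \<and> z \<in> valring v)"
  proof
    assume y: "y \<in> On (Suc k)"
    then have "y \<noteq> []" unfolding On_def by auto
    then have "y = butlast y @ [last y]" by simp
    moreover have "butlast y \<in> On k" using y unfolding On_def by (auto simp: nth_butlast)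
    moreover have "last y \<in> valring v"
    proof -
      have "last y = y ! k" using y \<open>y \<noteq> []\<close> unfolding On_def by (simp add: last_conv_nth)
      then show ?thesis using y unfolding On_def by simp
    qed
    ultimately show "\<exists>x z. y = x @ [z] \<and> x \<in> On k \<and> z \<in> valring v" by blast
  next
    assume "\<exists>x z. y = x @ [z] \<and> x \<in> On k \<and> z \<in> valring v"
    then obtain x z where "y = x @ [z]" "x \<in> On k" "z \<in> valring v" by blast
    then show "y \<in> On (Suc k)" unfolding On_def by (auto simp: nth_append less_Suc_eq)
  qed
  then show "sy \<in> fam_times_O v (S \<times> On k) \<longleftrightarrow> sy \<in> S \<times> On (Suc k)"
    unfolding fam_times_O_def sy by auto
qed

lemma R4_chain: "k \<ge> 1 \<Longrightarrow> eqv (gsym (1, unit_fam v S)) (gsym (k, S \<times> On k))"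
proof (induction k rule: dec_induct)
  case base then show ?case unfolding unit_fam_On by (rule eqv_refl)
next
  case (step k)
  have "(\<lambda>g. gsym (k, S \<times> On k) g - gsym (Suc k, fam_times_O v (S \<times> On k)) g) \<in> G"
    by (rule rel_subgroup.R4[OF adm_prod]) (use step in \<open>auto simp: On_def intro: fdef_O\<close>)
  then have "eqv (gsym (k, S \<times> On k)) (gsym (Suc k, S \<times> On (Suc k)))"
    unfolding eqv_def times_O_On .
  then show ?case using step eqv_trans by blast
qed

end


context pfS begin

lemma Qs_On: "Qs n b \<subseteq> On n"
  unfolding On_J using Qs_O Qs_len by blast

lemma R3_elem:
  assumes n: "n \<ge> 1" and i: "i < n" and j: "j < n" and jc: "j = i \<longrightarrow> c = 0" and lb: "length b = n"
    and d: "\<not> int p dvd d"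
  shows "eqv (gsym (n, S \<times> Qs n b)) (gsym (n, S \<times> Qs n (belem i j d c b)))"
  unfolding eqv_def
proof (rule rel_subgroup.R3[where \<phi> = "\<lambda>s. elem i j d c"])
  show "admissible p v m S n (S \<times> Qs n b)" by (rule adm_prod[OF n fdef_Qs Qs_On])
  show "admissible p v m S n (S \<times> Qs n (belem i j d c b))" by (rule adm_prod[OF n fdef_Qs Qs_On])
  have Fl: "Qs n b \<subseteq> {xs. length xs = n}" using Qs_len by blast
  show "definable v (m + n + n) {s @ x @ elem i j d c x | s x. (s, x) \<in> S \<times> Qs n b}"
    by (rule graph_definable[OF defS fdef_Qs Fl i j])
  show "\<forall>s\<in>S. bij_betw (elem i j d c) (fibre (S \<times> Qs n b) s) (fibre (S \<times> Qs n (belem i j d c b)) s) \<and>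
       popen v n (fibre (S \<times> Qs n b) s) \<and> popen v n (fibre (S \<times> Qs n (belem i j d c b)) s) \<and>
       (\<exists>D. C1_with_jac p v n (fibre (S \<times> Qs n b) s) (elem i j d c) D \<and>
            (\<forall>x\<in>fibre (S \<times> Qs n b) s. pabs p v (det_n n (D x)) = 1))"
  proof
    fix s assume s: "s \<in> S"
    show "bij_betw (elem i j d c) (fibre (S \<times> Qs n b) s) (fibre (S \<times> Qs n (belem i j d c b)) s) \<and>
       popen v n (fibre (S \<times> Qs n b) s) \<and> popen v n (fibre (S \<times> Qs n (belem i j d c b)) s) \<and>
       (\<exists>D. C1_with_jac p v n (fibre (S \<times> Qs n b) s) (elem i j d c) D \<and>
            (\<forall>x\<in>fibre (S \<times> Qs n b) s. pabs p v (det_n n (D x)) = 1))"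
      unfolding fibre_prod[OF s]
    proof (intro conjI exI[of _ "\<lambda>x. Dm i j d c"] ballI)
      show "bij_betw (elem i j d c) (Qs n b) (Qs n (belem i j d c b))" by (rule elem_bij[OF i j jc lb d])
      show "popen v n (Qs n b)" by (rule Qs_open)
      show "popen v n (Qs n (belem i j d c b))" by (rule Qs_open)
      show "C1_with_jac p v n (Qs n b) (elem i j d c) (\<lambda>x. Dm i j d c)" by (rule elem_C1[OF Fl i j jc])
      fix x show "pabs p v (det_n n (Dm i j d c)) = 1" unfolding det_Dm[OF i] by (rule pabs_unit[OF d])
    qed
  qed
qed

lemma not_dvd_1: "\<not> int p dvd 1"
  using p2 by (simp add: zdvd_not_zless)

lemma find_c:
  assumes "\<not> int p dvd bk"
  shows "\<exists>c. int p dvd (1 + c * bk - br)"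
proof -
  have "coprime (int p) bk" using prime assms
    by (simp add: prime_imp_coprime_int prime_nat_iff_prime)
  then have g: "gcd bk (int p) = 1" by (simp add: coprime_iff_gcd_eq_1 gcd.commute)
  obtain u w where uw: "u * bk + w * int p = gcd bk (int p)" using bezout_int[of bk "int p"] by blast
  have ubk: "u * bk = 1 - w * int p" using uw g by simp
  have e1: "1 + (u * (br - 1)) * bk - br = (br - 1) * (u * bk - 1)" by (simp add: algebra_simps)
  also have "\<dots> = (br - 1) * (- w) * int p" unfolding ubk by (simp add: algebra_simps)
  finally have fin: "1 + (u * (br - 1)) * bk - br = int p * ((br - 1) * (- w))" by (simp add: ac_simps)
  have "int p dvd (1 + (u * (br - 1)) * bk - br)" by (subst fin) (rule dvd_triv_left)
  then show ?thesis by blast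
qed

definition Inv :: "nat \<Rightarrow> nat \<Rightarrow> int list \<Rightarrow> nat \<Rightarrow> int list \<Rightarrow> bool" where
  "Inv n k b r w \<longleftrightarrow> length w = n \<and> w ! k = b ! k \<and>
     (\<forall>a<n. a \<noteq> k \<longrightarrow> (if a < r then int p dvd (w ! a - b ! a) else w ! a = 1))"

lemma reach:
  assumes n: "n \<ge> 1" and b: "b \<in> Bset n"
  shows "eqv (gsym (n, S \<times> Qs n (replicate n 1))) (gsym (n, S \<times> Qs n b))"
proof -
  obtain k where k: "k < n" "b ! k \<noteq> 0" using b unfolding Bset_def by blast
  have bk: "\<not> int p dvd b ! k" by (rule Bset_unit[OF b k])
  have lb: "length b = n" using b unfolding Bset_def by simp
  have P: "r \<le> n \<Longrightarrow> \<exists>w. Inv n k b r w \<and> eqv (gsym (n, S \<times> Qs n (replicate n 1))) (gsym (n, S \<times> Qs n w))" for r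
  proof (induction r)
    case 0
    define w where "w = belem k k (b ! k) 0 (replicate n 1)"
    have "Inv n k b 0 w" unfolding Inv_def w_def belem_def using k by (auto simp: nth_list_update)
    moreover have "eqv (gsym (n, S \<times> Qs n (replicate n 1))) (gsym (n, S \<times> Qs n w))"
      unfolding w_def by (rule R3_elem[OF n k(1) k(1)]) (use bk in auto)
    ultimately show ?case by blast
  next
    case (Suc r)
    then obtain w where w: "Inv n k b r w" and e: "eqv (gsym (n, S \<times> Qs n (replicate n 1))) (gsym (n, S \<times> Qs n w))"
      by auto
    have r: "r < n" using Suc.prems by simp
    show ?case
    proof (cases "r = k")
      case True
      have "Inv n k b (Suc r) w" using w True unfolding Inv_def by (auto simp: less_Suc_eq)
      then show ?thesis using e by blast
    next
      case False
      obtain c where c: "int p dvd (1 + c * b ! k - b ! r)" using find_c[OF bk] by blast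
      define w' where "w' = belem r k 1 c w"
      have wr: "w ! r = 1" using w False r unfolding Inv_def by auto
      have wk: "w ! k = b ! k" using w unfolding Inv_def by simp
      have lw: "length w = n" using w unfolding Inv_def by simp
      have "Inv n k b (Suc r) w'"
        unfolding Inv_def w'_def belem_def
      proof (intro conjI allI impI)
        show "length (w[r := 1 * w ! r + c * w ! k]) = n" using lw by simp
        show "w[r := 1 * w ! r + c * w ! k] ! k = b ! k" using False wk by simp
        fix a assume a: "a < n" "a \<noteq> k"
        show "if a < Suc r then int p dvd (w[r := 1 * w ! r + c * w ! k] ! a - b ! a) else w[r := 1 * w ! r + c * w ! k] ! a = 1"
        proof (cases "a = r")
          case True then show ?thesis using wr wk c lw r by (simp add: algebra_simps)
        next
          case False then show ?thesis using w a unfolding Inv_def by (auto simp: less_Suc_eq)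
        qed
      qed
      moreover have "eqv (gsym (n, S \<times> Qs n w)) (gsym (n, S \<times> Qs n w'))"
        unfolding w'_def by (rule R3_elem[OF n r k(1)]) (use False lw not_dvd_1 in auto)
      ultimately show ?thesis using e eqv_trans by blast
    qed
  qed
  obtain w where w: "Inv n k b n w" and e: "eqv (gsym (n, S \<times> Qs n (replicate n 1))) (gsym (n, S \<times> Qs n w))"
    using P[of n] by blast
  have lw: "length w = n" using w unfolding Inv_def by simp
  have dv: "\<forall>a<n. int p dvd (w ! a - b ! a)"
  proof (intro allI impI)
    fix a assume a: "a < n"
    show "int p dvd (w ! a - b ! a)"
    proof (cases "a = k")
      case True then show ?thesis using w unfolding Inv_def by simp
    next
      case False then show ?thesis using w a unfolding Inv_def by simp
    qed
  qed
  have dv': "\<forall>a<n. int p dvd (b ! a - w ! a)"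
    using dv by (metis dvd_minus_iff minus_diff_eq)
  have "Qs n w = Qs n b" using Qs_cong[OF lw lb dv] Qs_cong[OF lb lw dv'] by blast
  then show ?thesis using e by simp
qed


lemma Bset_eq: "Bset n = {xs. set xs \<subseteq> {0..<int p} \<and> length xs = n} - {replicate n 0}"
proof (rule Set.set_eqI)
  fix b :: "int list"
  have "set b \<subseteq> {0..<int p} \<longleftrightarrow> (\<forall>a<length b. 0 \<le> b ! a \<and> b ! a < int p)"
    by (auto simp: set_conv_nth)
  moreover have "length b = n \<Longrightarrow> b \<noteq> replicate n 0 \<longleftrightarrow> (\<exists>a<n. b ! a \<noteq> 0)"
    by (auto simp: list_eq_iff_nth_eq)
  ultimately show "b \<in> Bset n \<longleftrightarrow> b \<in> {xs. set xs \<subseteq> {0..<int p} \<and> length xs = n} - {replicate n 0}"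
    unfolding Bset_def by auto
qed

lemma Bset_fin: "finite (Bset n)"
  unfolding Bset_eq using finite_lists_length_eq[of "{0..<int p}" n] by simp

lemma Bset_card: "card (Bset n) = p ^ n - 1"
proof -
  have "replicate n 0 \<in> {xs. set xs \<subseteq> {0..<int p} \<and> length xs = n}" using p2 by auto
  then show ?thesis unfolding Bset_eq
    using card_lists_length_eq[of "{0..<int p}" n] finite_lists_length_eq[of "{0..<int p}" n]
    by (simp add: card_Diff_singleton)
qed

lemma On_decomp: "On n = {replicate n 0} \<union> (\<Union>b\<in>Bset n. Qs n b)"
proof
  show "On n \<subseteq> {replicate n 0} \<union> (\<Union>b\<in>Bset n. Qs n b)"
  proof
    fix x assume x: "x \<in> On n"
    show "x \<in> {replicate n 0} \<union> (\<Union>b\<in>Bset n. Qs n b)"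
    proof (cases "x = replicate n 0")
      case False
      then show ?thesis using Qs_cover[of x n] x unfolding On_J by blast
    qed simp
  qed
  show "{replicate n 0} \<union> (\<Union>b\<in>Bset n. Qs n b) \<subseteq> On n"
    using Qs_On by (auto simp: On_J)
qed

lemma Pset_eq: "Pset p v (S \<times> Delta n) = S \<times> Qs n (replicate n 1)"
proof (rule Set.set_eqI)
  fix sx :: "'k list \<times> 'k list"
  obtain s x where sx: "sx = (s, x)" by force
  have "sx \<in> Pset p v (S \<times> Delta n) \<longleftrightarrow> s \<in> S \<and> (\<exists>l::nat. length x = n \<and> (\<forall>i<n. ac_one p v (x ! i) \<and> v (x ! i) = int l))"
    unfolding Pset_def Delta_def sx by auto
  also have "\<dots> \<longleftrightarrow> s \<in> S \<and> x \<in> Qs n (replicate n 1)" using Qs_ones[of x n] by blast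
  also have "\<dots> \<longleftrightarrow> sx \<in> S \<times> Qs n (replicate n 1)" unfolding sx by simp
  finally show "sx \<in> Pset p v (S \<times> Delta n) \<longleftrightarrow> sx \<in> S \<times> Qs n (replicate n 1)" .
qed

theorem main:
  assumes n: "n \<ge> 1"
  shows "(\<lambda>g. (int p ^ n - 1) * gsym (n, Pset p v (S \<times> Delta n)) g - gsym (1, unit_fam v S) g) \<in> G"
proof -
  define P where "P = gsym (n, S \<times> Qs n (replicate n 1))"
  define U where "U = (\<Union>b\<in>Bset n. Qs n b)"
  have e1: "eqv (gsym (1, unit_fam v S)) (gsym (n, S \<times> On n))" by (rule R4_chain[OF n])
  have fU: "fdef v m n U" unfolding U_def by (rule fdef_UN[OF Bset_fin fdef_Qs])
  have UO: "U \<subseteq> On n" unfolding U_def using Qs_On by blast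
  have zO: "{replicate n 0} \<subseteq> On n" by (auto simp: On_J)
  have dj: "{replicate n 0} \<inter> U = {}" unfolding U_def using Qs_zero by blast
  have e2: "eqv (gsym (n, S \<times> On n)) (\<lambda>g. gsym (n, S \<times> {replicate n 0}) g + gsym (n, S \<times> U) g)"
    using R1_prod[OF n fdef_zero zO fU UO dj] unfolding U_def On_decomp[symmetric] .
  have z: "eqv (gsym (n, S \<times> {replicate n (0::'k)})) (\<lambda>g. 0)"
    unfolding eqv_def using R2_zero[OF n] by simp
  have e3: "eqv (gsym (n, S \<times> U)) (\<lambda>g. \<Sum>b\<in>Bset n. gsym (n, S \<times> Qs n b) g)"
    unfolding U_def
  proof (rule R1_UN[OF n Bset_fin fdef_Qs Qs_On])
    fix b b' assume "b \<in> Bset n" "b' \<in> Bset n" "b \<noteq> b'"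
    then show "Qs n b \<inter> Qs n b' = {}" using Qs_disj by blast
  qed
  have e4: "eqv (\<lambda>g. \<Sum>b\<in>Bset n. gsym (n, S \<times> Qs n b) g) (\<lambda>g. \<Sum>b\<in>Bset n. P g)"
    by (rule eqv_sum[OF Bset_fin]) (use reach[OF n] eqv_sym in \<open>auto simp: P_def\<close>)
  have e5: "(\<lambda>g. \<Sum>b\<in>Bset n. P g) = (\<lambda>g. (int p ^ n - 1) * P g)"
  proof -
    have "p ^ n \<ge> 1" using p2 by simp
    then have "int (p ^ n - 1) = int p ^ n - 1" by (simp add: of_nat_diff)
    then show ?thesis by (simp add: Bset_card)
  qed
  have "eqv (gsym (1, unit_fam v S)) (\<lambda>g. 0 + (\<Sum>b\<in>Bset n. P g))"
    using e1 e2 eqv_add[OF z eqv_trans[OF e3 e4]] eqv_trans by blast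
  then have "eqv (gsym (1, unit_fam v S)) (\<lambda>g. (int p ^ n - 1) * P g)" using e5 by simp
  then have "eqv (\<lambda>g. (int p ^ n - 1) * P g) (gsym (1, unit_fam v S))" by (rule eqv_sym)
  then show ?thesis unfolding eqv_def P_def Pset_eq .
qed

end

theorem mainTheorem4:
  fixes p :: nat and v :: "'k::field \<Rightarrow> int" and S :: "'k list set" and m n :: nat
  assumes "padic_field p v"
    and "definable v m S"
    and "n \<ge> 1"
  shows "(\<lambda>g. (int p ^ n - 1) * gsym (n, Pset p v (S \<times> Delta n)) g - gsym (1, unit_fam v S) g)
           \<in> rel_subgroup p v m S"
proof -
  interpret pfS p v S m
    by unfold_locales (use assms in \<open>simp_all add: pf_def\<close>)
  show ?thesis by (rule main[OF assms(3)])
qed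


end
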